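(* Let $k$ be a field of characteristic $0$, $A=kQ_A/I_A$ a radical square zero algebra, and $B$ the algebra obtained by gluing two distinct non-isolated vertices $e_1,e_n$ lying in the same block of $A$. If $Z_{spp}=0$, then there is a Lie algebra isomorphism $\mathrm{HH}^1(B)\cong\mathrm{HH}^1(A)\times k$.
   Context: A radical square zero algebra is $A=kQ_A/I_A$ with $I_A$ generated by all paths of length 2 of the finite quiver $Q_A$. Gluing: $B\subseteq A$ generated by $f_1=e_1+e_n$, the other vertex idempotents $f_i=e_i$ and all arrows; $B\cong kQ_B/I_B$ with $Q_B$ obtained by identifying $e_1,e_n$ to $f_1$ (arrow $\alpha\mapsto\alpha^*$, path $p\mapsto p^*$, $e_1^*=e_n^*=f_1$) and $I_B$ generated by all length-2 paths of $Q_B$. Blocks of $A$ correspond to connected components of $Q_A$. For path sets $X,Y$, $k(X\|Y)$ has basis the pairs $x\|y$ of parallel paths. $\delta^1_B:k((Q_B)_1\|\mathcal B_B)\to k((Q_B)_2\|\mathcal B_B)$ ($\mathcal B_B$ = vertices and arrows of $Q_B$), $a\|\gamma\mapsto\sum_{r}r\|r^{a\|\gamma}$ over length-2 paths $r$, where $r^{a\|\gamma}$ is the sum over occurrences of $a$ in $r$ of the path obtained by replacing that occurrence by $\gamma$, keeping only paths in $\mathcal B_B$. A special pair is $(\alpha,p)$ with $\alpha$ an arrow of $Q_A$ starting or ending at $e_1$ or $e_n$, $p$ a vertex or arrow of $Q_A$, $\alpha^*$ parallel to $p^*$ in $Q_B$ but $\alpha$ not parallel to $p$ in $Q_A$; $Z_{spp}$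 is the intersection of $\mathrm{Ker}\,\delta^1_B$ with the span of the $\alpha^*\|p^*$ over special pairs. *)

theory Defs
  imports Main
begin

(* A finite quiver is given by a vertex set V, an arrow set E and source / target maps s t.
   A path is a pair (start vertex, list of arrows); the trivial path at v is (v, []). *)

type_synonym ('v,'a) path = "'v \<times> 'a list"

definition path_tgt :: "('a \<Rightarrow> 'v) \<Rightarrow> ('v,'a) path \<Rightarrow> 'v" where
  "path_tgt t p = (if snd p = [] then fst p else t (last (snd p)))"

definition parallel :: "('a \<Rightarrow> 'v) \<Rightarrow> ('v,'a) path \<Rightarrow> ('v,'a) path \<Rightarrow> bool" where
  "parallel t p q \<longleftrightarrow> fst p = fst q \<and> path_tgt t p = path_tgt t q"

definition is_quiver :: "'v set \<Rightarrow> 'a set \<Rightarrow> ('a \<Rightarrow> 'v) \<Rightarrow> ('a \<Rightarrow> 'v) \<Rightarrow> bool" where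
  "is_quiver V E s t \<longleftrightarrow> finite V \<and> finite E \<and> (\<forall>\<alpha>\<in>E. s \<alpha> \<in> V \<and> t \<alpha> \<in> V)"

definition arr_path :: "('a \<Rightarrow> 'v) \<Rightarrow> 'a \<Rightarrow> ('v,'a) path" where
  "arr_path s \<alpha> = (s \<alpha>, [\<alpha>])"

definition rsz_basis :: "'v set \<Rightarrow> 'a set \<Rightarrow> ('a \<Rightarrow> 'v) \<Rightarrow> ('v,'a) path set" where
  "rsz_basis V E s = (\<lambda>v. (v, [])) ` V \<union> arr_path s ` E"

definition arrows_paths :: "'a set \<Rightarrow> ('a \<Rightarrow> 'v) \<Rightarrow> ('v,'a) path set" where
  "arrows_paths E s = arr_path s ` E"

definition paths2 :: "'a set \<Rightarrow> ('a \<Rightarrow> 'v) \<Rightarrow> ('a \<Rightarrow> 'v) \<Rightarrow> ('v,'a) path set" where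
  "paths2 E s t = {(s \<beta>1, [\<beta>1, \<beta>2]) | \<beta>1 \<beta>2. \<beta>1 \<in> E \<and> \<beta>2 \<in> E \<and> t \<beta>1 = s \<beta>2}"

definition rsz_carrier :: "'v set \<Rightarrow> 'a set \<Rightarrow> ('a \<Rightarrow> 'v) \<Rightarrow> (('v,'a) path \<Rightarrow> 'k::field) set" where
  "rsz_carrier V E s = {x. \<forall>c. c \<notin> rsz_basis V E s \<longrightarrow> x c = 0}"

(* multiplication: concatenation of composable basis paths, paths of length 2 are zero *)
definition rsz_mult :: "'v set \<Rightarrow> 'a set \<Rightarrow> ('a \<Rightarrow> 'v) \<Rightarrow> ('a \<Rightarrow> 'v) \<Rightarrow>
    (('v,'a) path \<Rightarrow> 'k::field) \<Rightarrow> (('v,'a) path \<Rightarrow> 'k) \<Rightarrow> (('v,'a) path \<Rightarrow> 'k)" where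
  "rsz_mult V E s t x y = (\<lambda>c. \<Sum>p\<in>rsz_basis V E s. \<Sum>q\<in>rsz_basis V E s.
      if path_tgt t p = fst q \<and> length (snd p @ snd q) \<le> 1 \<and> (fst p, snd p @ snd q) = c
      then x p * y q else 0)"

definition vadd :: "('b \<Rightarrow> 'k::field) \<Rightarrow> ('b \<Rightarrow> 'k) \<Rightarrow> ('b \<Rightarrow> 'k)" where
  "vadd x y = (\<lambda>c. x c + y c)"

definition vsmult :: "'k::field \<Rightarrow> ('b \<Rightarrow> 'k) \<Rightarrow> ('b \<Rightarrow> 'k)" where
  "vsmult a x = (\<lambda>c. a * x c)"

definition Der :: "'v set \<Rightarrow> 'a set \<Rightarrow> ('a \<Rightarrow> 'v) \<Rightarrow> ('a \<Rightarrow> 'v) \<Rightarrow> 'k::field itself \<Rightarrow>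
    ((('v,'a) path \<Rightarrow> 'k) \<Rightarrow> (('v,'a) path \<Rightarrow> 'k)) set" where
  "Der V E s t K = {D. (\<forall>x. x \<notin> rsz_carrier V E s \<longrightarrow> D x = (\<lambda>_. 0))
     \<and> (\<forall>x\<in>rsz_carrier V E s. D x \<in> rsz_carrier V E s)
     \<and> (\<forall>x\<in>rsz_carrier V E s. \<forall>y\<in>rsz_carrier V E s. D (vadd x y) = vadd (D x) (D y))
     \<and> (\<forall>a. \<forall>x\<in>rsz_carrier V E s. D (vsmult a x) = vsmult a (D x))
     \<and> (\<forall>x\<in>rsz_carrier V E s. \<forall>y\<in>rsz_carrier V E s.
          D (rsz_mult V E s t x y) = vadd (rsz_mult V E s t (D x) y) (rsz_mult V E s t x (D y)))}"

definition Inn :: "'v set \<Rightarrow> 'a set \<Rightarrow> ('a \<Rightarrow> 'v) \<Rightarrow> ('a \<Rightarrow> 'v) \<Rightarrow> 'k::field itself \<Rightarrow>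
    ((('v,'a) path \<Rightarrow> 'k) \<Rightarrow> (('v,'a) path \<Rightarrow> 'k)) set" where
  "Inn V E s t K = {D. \<exists>a\<in>rsz_carrier V E s. D = (\<lambda>x. if x \<in> rsz_carrier V E s
       then (\<lambda>c. rsz_mult V E s t a x c - rsz_mult V E s t x a c) else (\<lambda>_. 0))}"

definition dadd :: "(('b \<Rightarrow> 'k::field) \<Rightarrow> ('b \<Rightarrow> 'k)) \<Rightarrow> (('b \<Rightarrow> 'k) \<Rightarrow> ('b \<Rightarrow> 'k)) \<Rightarrow> (('b \<Rightarrow> 'k) \<Rightarrow> ('b \<Rightarrow> 'k))" where
  "dadd D D' = (\<lambda>x c. D x c + D' x c)"

definition dsub :: "(('b \<Rightarrow> 'k::field) \<Rightarrow> ('b \<Rightarrow> 'k)) \<Rightarrow> (('b \<Rightarrow> 'k) \<Rightarrow> ('b \<Rightarrow> 'k)) \<Rightarrow> (('b \<Rightarrow> 'k) \<Rightarrow> ('b \<Rightarrow> 'k))" where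
  "dsub D D' = (\<lambda>x c. D x c - D' x c)"

definition dsmult :: "'k::field \<Rightarrow> (('b \<Rightarrow> 'k) \<Rightarrow> ('b \<Rightarrow> 'k)) \<Rightarrow> (('b \<Rightarrow> 'k) \<Rightarrow> ('b \<Rightarrow> 'k))" where
  "dsmult a D = (\<lambda>x c. a * D x c)"

definition dbracket :: "(('b \<Rightarrow> 'k::field) \<Rightarrow> ('b \<Rightarrow> 'k)) \<Rightarrow> (('b \<Rightarrow> 'k) \<Rightarrow> ('b \<Rightarrow> 'k)) \<Rightarrow> (('b \<Rightarrow> 'k) \<Rightarrow> ('b \<Rightarrow> 'k))" where
  "dbracket D D' = (\<lambda>x c. D (D' x) c - D' (D x) c)"

(* HH^1(B) \<cong> HH^1(A) \<times> k as Lie algebras (k the one-dimensional, hence abelian, Lie algebra).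
   HH^1(X) = Der(X)/Inn(X) with bracket induced by the commutator.  A Lie algebra isomorphism
   between the quotients is given by a k-linear lift  (\<phi>,\<psi>) : Der(B) \<rightarrow> Der(A) \<times> k  which
   - induces a well-defined injective map on quotients:  (\<phi> D, \<psi> D) \<in> Inn(A) \<times> 0  iff  D \<in> Inn(B),
   - induces a surjective map on quotients,
   - is compatible with brackets modulo Inn(A) \<times> 0 (bracket on the product: ([E,E'], 0)). *)
definition HH1_iso_times_field ::
  "'v set \<Rightarrow> 'a set \<Rightarrow> ('a \<Rightarrow> 'v) \<Rightarrow> ('a \<Rightarrow> 'v) \<Rightarrow>
   'w set \<Rightarrow> 'b set \<Rightarrow> ('b \<Rightarrow> 'w) \<Rightarrow> ('b \<Rightarrow> 'w) \<Rightarrow> 'k::field itself \<Rightarrow> bool" where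
  "HH1_iso_times_field VB EB sB tB VA EA sA tA K \<longleftrightarrow>
   (\<exists>(\<phi> :: ((('v,'a) path \<Rightarrow> 'k) \<Rightarrow> (('v,'a) path \<Rightarrow> 'k)) \<Rightarrow> ((('w,'b) path \<Rightarrow> 'k) \<Rightarrow> (('w,'b) path \<Rightarrow> 'k)))
      (\<psi> :: ((('v,'a) path \<Rightarrow> 'k) \<Rightarrow> (('v,'a) path \<Rightarrow> 'k)) \<Rightarrow> 'k).
     (\<forall>D\<in>Der VB EB sB tB K. \<phi> D \<in> Der VA EA sA tA K)
   \<and> (\<forall>D\<in>Der VB EB sB tB K. \<forall>D'\<in>Der VB EB sB tB K.
        \<phi> (dadd D D') = dadd (\<phi> D) (\<phi> D') \<and> \<psi> (dadd D D') = \<psi> D + \<psi> D')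
   \<and> (\<forall>a. \<forall>D\<in>Der VB EB sB tB K. \<phi> (dsmult a D) = dsmult a (\<phi> D) \<and> \<psi> (dsmult a D) = a * \<psi> D)
   \<and> (\<forall>D\<in>Der VB EB sB tB K. (\<phi> D \<in> Inn VA EA sA tA K \<and> \<psi> D = 0) \<longleftrightarrow> D \<in> Inn VB EB sB tB K)
   \<and> (\<forall>E\<in>Der VA EA sA tA K. \<forall>c. \<exists>D\<in>Der VB EB sB tB K.
        dsub (\<phi> D) E \<in> Inn VA EA sA tA K \<and> \<psi> D = c)
   \<and> (\<forall>D\<in>Der VB EB sB tB K. \<forall>D'\<in>Der VB EB sB tB K.
        dsub (\<phi> (dbracket D D')) (dbracket (\<phi> D) (\<phi> D')) \<in> Inn VA EA sA tA K
        \<and> \<psi> (dbracket D D') = 0))"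

definition glue :: "'v \<Rightarrow> 'v \<Rightarrow> 'v \<Rightarrow> 'v" where
  "glue v1 vn v = (if v = vn then v1 else v)"

definition glue_path :: "'v \<Rightarrow> 'v \<Rightarrow> ('v,'a) path \<Rightarrow> ('v,'a) path" where
  "glue_path v1 vn p = (glue v1 vn (fst p), snd p)"

definition non_isolated :: "'a set \<Rightarrow> ('a \<Rightarrow> 'v) \<Rightarrow> ('a \<Rightarrow> 'v) \<Rightarrow> 'v \<Rightarrow> bool" where
  "non_isolated E s t v \<longleftrightarrow> (\<exists>\<alpha>\<in>E. s \<alpha> = v \<or> t \<alpha> = v)"

(* same connected component of the underlying graph of Q, i.e. same block of kQ/I *)
definition same_block :: "'a set \<Rightarrow> ('a \<Rightarrow> 'v) \<Rightarrow> ('a \<Rightarrow> 'v) \<Rightarrow> 'v \<Rightarrow> 'v \<Rightarrow> bool" where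
  "same_block E s t u v \<longleftrightarrow>
     (u, v) \<in> ({(s \<alpha>, t \<alpha>) | \<alpha>. \<alpha> \<in> E} \<union> {(t \<alpha>, s \<alpha>) | \<alpha>. \<alpha> \<in> E})\<^sup>*"

(* coefficient of the path p in r^{a||\<gamma>}: number of occurrences of the arrow of a in r whose
   replacement by \<gamma> yields p, only paths in the basis \<B> (vertices and arrows) being kept *)
definition subst_coeff :: "'v set \<Rightarrow> 'a set \<Rightarrow> ('a \<Rightarrow> 'v) \<Rightarrow>
    ('v,'a) path \<Rightarrow> ('v,'a) path \<Rightarrow> ('v,'a) path \<Rightarrow> ('v,'a) path \<Rightarrow> nat" where
  "subst_coeff V E s r a \<gamma> p = card {i. i < length (snd r) \<and> snd r ! i = hd (snd a)
      \<and> (fst r, take i (snd r) @ snd \<gamma> @ drop (Suc i) (snd r)) = p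
      \<and> p \<in> rsz_basis V E s}"

definition par_arrows_basis :: "'v set \<Rightarrow> 'a set \<Rightarrow> ('a \<Rightarrow> 'v) \<Rightarrow> ('a \<Rightarrow> 'v) \<Rightarrow>
    (('v,'a) path \<times> ('v,'a) path) set" where
  "par_arrows_basis V E s t = {(a, \<gamma>). a \<in> arrows_paths E s \<and> \<gamma> \<in> rsz_basis V E s \<and> parallel t a \<gamma>}"

(* \<delta>^1 applied to an element f of k(Q_1||\<B>) (coefficient function), coordinate r||p *)
definition delta1 :: "'v set \<Rightarrow> 'a set \<Rightarrow> ('a \<Rightarrow> 'v) \<Rightarrow> ('a \<Rightarrow> 'v) \<Rightarrow>
    (('v,'a) path \<times> ('v,'a) path \<Rightarrow> 'k::field) \<Rightarrow> (('v,'a) path \<times> ('v,'a) path \<Rightarrow> 'k)" where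
  "delta1 V E s t f = (\<lambda>(r, p). \<Sum>(a, \<gamma>)\<in>par_arrows_basis V E s t.
       f (a, \<gamma>) * of_nat (subst_coeff V E s r a \<gamma> p))"

definition special_pair :: "'v set \<Rightarrow> 'a set \<Rightarrow> ('a \<Rightarrow> 'v) \<Rightarrow> ('a \<Rightarrow> 'v) \<Rightarrow> 'v \<Rightarrow> 'v \<Rightarrow>
    'a \<Rightarrow> ('v,'a) path \<Rightarrow> bool" where
  "special_pair V E s t v1 vn \<alpha> p \<longleftrightarrow>
     \<alpha> \<in> E \<and> (s \<alpha> \<in> {v1, vn} \<or> t \<alpha> \<in> {v1, vn}) \<and> p \<in> rsz_basis V E s
     \<and> parallel (glue v1 vn \<circ> t) (glue_path v1 vn (arr_path s \<alpha>)) (glue_path v1 vn p)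
     \<and> \<not> parallel t (arr_path s \<alpha>) p"

(* Z_spp = 0: every element of the span of the \<alpha>^*||p^* (special pairs) lying in Ker \<delta>^1_B is zero *)
definition Zspp_zero :: "'k::field itself \<Rightarrow> 'v set \<Rightarrow> 'a set \<Rightarrow> ('a \<Rightarrow> 'v) \<Rightarrow> ('a \<Rightarrow> 'v) \<Rightarrow> 'v \<Rightarrow> 'v \<Rightarrow> bool" where
  "Zspp_zero K V E s t v1 vn \<longleftrightarrow>
    (let VB = V - {vn}; sB = glue v1 vn \<circ> s; tB = glue v1 vn \<circ> t;
         SPP = {(glue_path v1 vn (arr_path s \<alpha>), glue_path v1 vn p) | \<alpha> p. special_pair V E s t v1 vn \<alpha> p}
     in \<forall>f :: ('v,'a) path \<times> ('v,'a) path \<Rightarrow> 'k.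
          (\<forall>x. x \<notin> SPP \<longrightarrow> f x = 0)
        \<longrightarrow> (\<forall>r\<in>paths2 E sB tB. \<forall>p\<in>rsz_basis VB E sB. delta1 VB E sB tB f (r, p) = 0)
        \<longrightarrow> (\<forall>x. f x = 0))"

end

theory Submission
  imports Defs
begin


definition ind :: "('v,'a) path \<Rightarrow> (('v,'a) path \<Rightarrow> 'k::field)" where
  "ind p = (\<lambda>c. if c = p then 1 else 0)"

definition blk :: "('a \<Rightarrow> 'v) \<Rightarrow> ((('v,'a) path \<Rightarrow> 'k::field) \<Rightarrow> (('v,'a) path \<Rightarrow> 'k)) \<Rightarrow> 'a \<Rightarrow> 'a \<Rightarrow> 'k" where
  "blk s D \<alpha> \<beta> = D (ind (arr_path s \<alpha>)) (arr_path s \<beta>)"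

definition derN :: "'v set \<Rightarrow> 'a set \<Rightarrow> ('a \<Rightarrow> 'v) \<Rightarrow> ('a \<Rightarrow> 'a \<Rightarrow> 'k::field)
   \<Rightarrow> (('v,'a) path \<Rightarrow> 'k) \<Rightarrow> (('v,'a) path \<Rightarrow> 'k)" where
  "derN V E s N x = (if x \<in> rsz_carrier V E s then (\<lambda>c. if c \<in> arr_path s ` E
      then (\<Sum>\<alpha>\<in>E. x (arr_path s \<alpha>) * N \<alpha> (hd (snd c))) else 0) else (\<lambda>_. 0))"

definition ad :: "'v set \<Rightarrow> 'a set \<Rightarrow> ('a \<Rightarrow> 'v) \<Rightarrow> ('a \<Rightarrow> 'v) \<Rightarrow> (('v,'a) path \<Rightarrow> 'k::field)
   \<Rightarrow> (('v,'a) path \<Rightarrow> 'k) \<Rightarrow> (('v,'a) path \<Rightarrow> 'k)" where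
  "ad V E s t a x = (if x \<in> rsz_carrier V E s then
       (\<lambda>c. rsz_mult V E s t a x c - rsz_mult V E s t x a c) else (\<lambda>_. 0))"

lemma Inn_iff: "D \<in> Inn V E s t K \<longleftrightarrow> (\<exists>a\<in>rsz_carrier V E s. D = ad V E s t a)"
  unfolding Inn_def ad_def by (auto simp: fun_eq_iff)

lemma double_delta:
  assumes "finite S" "a \<in> S" "b \<in> S"
  shows "(\<Sum>p\<in>S. \<Sum>q\<in>S. if p = a \<and> q = b then f p q else 0) = (f a b :: 'k::comm_monoid_add)"
proof -
  have "\<And>p. (\<Sum>q\<in>S. if p = a \<and> q = b then f p q else 0) = (if p = a then f p b else 0)"
  proof -
    fix p show "(\<Sum>q\<in>S. if p = a \<and> q = b then f p q else 0) = (if p = a then f p b else 0)"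
      using assms by (cases "p = a") (simp_all add: sum.delta')
  qed
  then show ?thesis using assms by (simp add: sum.delta')
qed

definition lin :: "('p \<Rightarrow> 'k::field) set \<Rightarrow> (('p \<Rightarrow> 'k) \<Rightarrow> ('p \<Rightarrow> 'k)) \<Rightarrow> bool" where
  "lin C F \<longleftrightarrow> (\<forall>x\<in>C. \<forall>y\<in>C. F (vadd x y) = vadd (F x) (F y)) \<and> (\<forall>a. \<forall>x\<in>C. F (vsmult a x) = vsmult a (F x))"

definition closed :: "('p \<Rightarrow> 'k::field) set \<Rightarrow> bool" where
  "closed C \<longleftrightarrow> (\<lambda>_. 0) \<in> C \<and> (\<forall>x\<in>C. \<forall>y\<in>C. vadd x y \<in> C) \<and> (\<forall>a. \<forall>x\<in>C. vsmult a x \<in> C)"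

lemma lin_zero:
  assumes "lin C F" "closed C"
  shows "F (\<lambda>_. 0) = (\<lambda>_. 0)"
proof -
  have z: "(\<lambda>_. 0) \<in> C" using assms(2) unfolding closed_def by auto
  have "F (\<lambda>_. 0) = F (vsmult 0 (\<lambda>_. 0))" by (simp add: vsmult_def)
  also have "\<dots> = vsmult 0 (F (\<lambda>_. 0))" using assms(1) z unfolding lin_def by auto
  finally show ?thesis by (simp add: vsmult_def)
qed

lemma closed_sum:
  assumes "closed C" "finite S" "\<forall>b\<in>S. g b \<in> C"
  shows "(\<lambda>c. \<Sum>b\<in>S. f b * g b c) \<in> C"
  using assms(2,3)
proof (induction S rule: finite_induct)
  case empty
  then show ?case using assms(1) unfolding closed_def by simp
next
  case (insert b S)
  have e: "(\<lambda>c. \<Sum>b\<in>insert b S. f b * g b c) = vadd (vsmult (f b) (g b)) (\<lambda>c. \<Sum>b\<in>S. f b * g b c)"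
    using insert by (simp add: vadd_def vsmult_def)
  show ?case unfolding e using insert assms(1) unfolding closed_def by auto
qed

lemma lin_sum:
  assumes "lin C F" "closed C" "finite S" "\<forall>b\<in>S. g b \<in> C"
  shows "F (\<lambda>c. \<Sum>b\<in>S. f b * g b c) = (\<lambda>c. \<Sum>b\<in>S. f b * F (g b) c)"
  using assms(3,4)
proof (induction S rule: finite_induct)
  case empty
  then show ?case using lin_zero[OF assms(1,2)] by simp
next
  case (insert b S)
  have e: "(\<lambda>c. \<Sum>b\<in>insert b S. f b * g b c) = vadd (vsmult (f b) (g b)) (\<lambda>c. \<Sum>b\<in>S. f b * g b c)"
    using insert by (simp add: vadd_def vsmult_def)
  have m: "(\<lambda>c. \<Sum>b\<in>S. f b * g b c) \<in> C" using closed_sum[OF assms(2)] insert by auto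
  have g: "g b \<in> C" "vsmult (f b) (g b) \<in> C" using insert assms(2) unfolding closed_def by auto
  have "F (\<lambda>c. \<Sum>b\<in>insert b S. f b * g b c) = vadd (F (vsmult (f b) (g b))) (F (\<lambda>c. \<Sum>b\<in>S. f b * g b c))"
    unfolding e using assms(1) m g unfolding lin_def by auto
  also have "\<dots> = vadd (vsmult (f b) (F (g b))) (\<lambda>c. \<Sum>b\<in>S. f b * F (g b) c)"
    using insert g assms(1) unfolding lin_def by auto
  also have "\<dots> = (\<lambda>c. \<Sum>b\<in>insert b S. f b * F (g b) c)"
    using insert by (simp add: vadd_def vsmult_def)
  finally show ?case .
qed

definition vlift :: "'v set \<Rightarrow> ('v \<Rightarrow> 'k::field) \<Rightarrow> (('v,'a) path \<Rightarrow> 'k)" where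
  "vlift V l = (\<lambda>c. if snd c = [] \<and> fst c \<in> V then l (fst c) else 0)"

locale rq =
  fixes V :: "'v set" and E :: "'a set" and s t :: "'a \<Rightarrow> 'v"
  assumes finV: "finite V" and finE: "finite E"
    and sV: "\<And>\<alpha>. \<alpha> \<in> E \<Longrightarrow> s \<alpha> \<in> V" and tV: "\<And>\<alpha>. \<alpha> \<in> E \<Longrightarrow> t \<alpha> \<in> V"
begin

lemma basis_iff: "p \<in> rsz_basis V E s \<longleftrightarrow> (snd p = [] \<and> fst p \<in> V) \<or> (\<exists>\<beta>\<in>E. p = arr_path s \<beta>)"
  unfolding rsz_basis_def arr_path_def by (cases p) auto

lemma vtx_basis[simp]: "(v, []) \<in> rsz_basis V E s \<longleftrightarrow> v \<in> V"
  unfolding basis_iff arr_path_def by auto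

lemma arr_basis[simp]: "arr_path s \<beta> \<in> rsz_basis V E s \<longleftrightarrow> \<beta> \<in> E"
  unfolding basis_iff arr_path_def by auto

lemma arr_inj[simp]: "arr_path s \<alpha> = arr_path s \<beta> \<longleftrightarrow> \<alpha> = \<beta>"
  unfolding arr_path_def by auto

lemma arr_ne_vtx[simp]: "arr_path s \<alpha> \<noteq> (v, [])" "(v, []) \<noteq> arr_path s \<alpha>"
  unfolding arr_path_def by auto

lemma finite_basis: "finite (rsz_basis V E s)"
  unfolding rsz_basis_def using finV finE by auto

lemma carrier_out: "x \<in> rsz_carrier V E s \<Longrightarrow> c \<notin> rsz_basis V E s \<Longrightarrow> x c = 0"
  unfolding rsz_carrier_def by (cases c) auto

lemma ind_carrier[simp]: "p \<in> rsz_basis V E s \<Longrightarrow> ind p \<in> rsz_carrier V E s"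
  unfolding rsz_carrier_def ind_def by auto

lemma mult_vtx:
  assumes "v \<in> V"
  shows "rsz_mult V E s t x y (v, []) = x (v, []) * y (v, [])"
proof -
  have "rsz_mult V E s t x y (v, []) = (\<Sum>p\<in>rsz_basis V E s. \<Sum>q\<in>rsz_basis V E s.
      if p = (v, []) \<and> q = (v, []) then x p * y q else 0)"
    unfolding rsz_mult_def
    apply (intro sum.cong refl)
    apply (auto simp: path_tgt_def)
    done
  also have "\<dots> = x (v, []) * y (v, [])"
    using assms by (simp add: finite_basis double_delta)
  finally show ?thesis .
qed

lemma mult_arr:
  assumes "\<beta> \<in> E"
  shows "rsz_mult V E s t x y (arr_path s \<beta>) =
     x (s \<beta>, []) * y (arr_path s \<beta>) + x (arr_path s \<beta>) * y (t \<beta>, [])"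
proof -
  have "rsz_mult V E s t x y (arr_path s \<beta>) = (\<Sum>p\<in>rsz_basis V E s. \<Sum>q\<in>rsz_basis V E s.
      (if p = (s \<beta>, []) \<and> q = arr_path s \<beta> then x p * y q else 0)
    + (if p = arr_path s \<beta> \<and> q = (t \<beta>, []) then x p * y q else 0))"
    unfolding rsz_mult_def
    apply (intro sum.cong refl)
    apply (simp only: basis_iff)
    apply (auto simp: path_tgt_def arr_path_def)
    done
  also have "\<dots> = x (s \<beta>, []) * y (arr_path s \<beta>) + x (arr_path s \<beta>) * y (t \<beta>, [])"
    using assms sV tV by (simp add: sum.distrib finite_basis double_delta)
  finally show ?thesis .
qed

lemma mult_out:
  assumes "c \<notin> rsz_basis V E s"
  shows "rsz_mult V E s t x y c = 0"
  unfolding rsz_mult_def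
proof (intro sum.neutral ballI)
  fix p q assume p: "p \<in> rsz_basis V E s" and q: "q \<in> rsz_basis V E s"
  have "\<not> (path_tgt t p = fst q \<and> length (snd p @ snd q) \<le> 1 \<and> (fst p, snd p @ snd q) = c)"
  proof
    assume h: "path_tgt t p = fst q \<and> length (snd p @ snd q) \<le> 1 \<and> (fst p, snd p @ snd q) = c"
    have "c \<in> rsz_basis V E s"
      using p q h assms unfolding basis_iff by (auto simp: arr_path_def path_tgt_def)
    then show False using assms by simp
  qed
  then show "(if path_tgt t p = fst q \<and> length (snd p @ snd q) \<le> 1 \<and> (fst p, snd p @ snd q) = c
      then x p * y q else 0) = 0" by (rule if_not_P)
qed

lemma mult_carrier[simp]: "rsz_mult V E s t x y \<in> rsz_carrier V E s"
  unfolding rsz_carrier_def using mult_out by auto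

lemma closed_carrier[simp]: "closed (rsz_carrier V E s)"
  unfolding closed_def rsz_carrier_def vadd_def vsmult_def by auto

lemma mult_eval: "rsz_mult V E s t x y c = (if c \<in> rsz_basis V E s then
    (if snd c = [] then x c * y c else x (fst c, []) * y c + x c * y (t (hd (snd c)), [])) else 0)"
proof (cases "c \<in> rsz_basis V E s")
  case True
  then show ?thesis unfolding basis_iff
    using mult_vtx mult_arr by (cases c) (auto simp: arr_path_def)
next
  case False
  then show ?thesis using mult_out by simp
qed

lemma expand: "x \<in> rsz_carrier V E s \<Longrightarrow> x = (\<lambda>c. \<Sum>b\<in>rsz_basis V E s. x b * ind b c)"
  unfolding ind_def by (auto simp: fun_eq_iff finite_basis carrier_out if_distrib[where f="\<lambda>z. _ * z"] sum.delta' cong: if_cong)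

lemma lin_agree:
  assumes "lin (rsz_carrier V E s) F" "lin (rsz_carrier V E s) G"
    and "\<forall>b\<in>rsz_basis V E s. F (ind b) = G (ind b)" and "x \<in> rsz_carrier V E s"
  shows "F x = G x"
proof -
  have "F x = F (\<lambda>c. \<Sum>b\<in>rsz_basis V E s. x b * ind b c)" using expand[OF assms(4)] by simp
  also have "\<dots> = (\<lambda>c. \<Sum>b\<in>rsz_basis V E s. x b * F (ind b) c)"
    using lin_sum[OF assms(1) closed_carrier finite_basis, of ind x] by simp
  also have "\<dots> = (\<lambda>c. \<Sum>b\<in>rsz_basis V E s. x b * G (ind b) c)" using assms(3) by simp
  also have "\<dots> = G (\<lambda>c. \<Sum>b\<in>rsz_basis V E s. x b * ind b c)"
    using lin_sum[OF assms(2) closed_carrier finite_basis, of ind x] by simp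
  finally show ?thesis using expand[OF assms(4)] by simp
qed

lemma Der_lin: "D \<in> Der V E s t K \<Longrightarrow> lin (rsz_carrier V E s) D"
  unfolding Der_def lin_def by auto

lemma Der_in: "D \<in> Der V E s t K \<Longrightarrow> x \<in> rsz_carrier V E s \<Longrightarrow> D x \<in> rsz_carrier V E s"
  unfolding Der_def by auto

lemma Der_out: "D \<in> Der V E s t K \<Longrightarrow> x \<notin> rsz_carrier V E s \<Longrightarrow> D x = (\<lambda>_. 0)"
  unfolding Der_def by auto

lemma Der_mult: "D \<in> Der V E s t K \<Longrightarrow> x \<in> rsz_carrier V E s \<Longrightarrow> y \<in> rsz_carrier V E s \<Longrightarrow>
   D (rsz_mult V E s t x y) = vadd (rsz_mult V E s t (D x) y) (rsz_mult V E s t x (D y))"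
  unfolding Der_def by auto

lemma mult_es_xa: "\<alpha> \<in> E \<Longrightarrow> rsz_mult V E s t (ind (s \<alpha>, [])) (ind (arr_path s \<alpha>)) = ind (arr_path s \<alpha>)"
  unfolding mult_eval ind_def fun_eq_iff by (auto simp: basis_iff arr_path_def sV tV)

lemma mult_xa_et: "\<alpha> \<in> E \<Longrightarrow> rsz_mult V E s t (ind (arr_path s \<alpha>)) (ind (t \<alpha>, [])) = ind (arr_path s \<alpha>)"
  unfolding mult_eval ind_def fun_eq_iff by (auto simp: basis_iff arr_path_def sV tV)

lemma mult_xa_xa: "\<alpha> \<in> E \<Longrightarrow> rsz_mult V E s t (ind (arr_path s \<alpha>)) (ind (arr_path s \<alpha>)) = (\<lambda>_. 0)"
  unfolding mult_eval ind_def fun_eq_iff by (auto simp: basis_iff arr_path_def sV tV)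

lemma Der_arr_aux:
  assumes D: "D \<in> Der V E s t K" and \<alpha>: "\<alpha> \<in> E"
  shows "\<And>c. D (ind (arr_path s \<alpha>)) c = rsz_mult V E s t (D (ind (s \<alpha>, []))) (ind (arr_path s \<alpha>)) c
            + rsz_mult V E s t (ind (s \<alpha>, [])) (D (ind (arr_path s \<alpha>))) c"
    and "\<And>c. D (ind (arr_path s \<alpha>)) c = rsz_mult V E s t (D (ind (arr_path s \<alpha>))) (ind (t \<alpha>, [])) c
            + rsz_mult V E s t (ind (arr_path s \<alpha>)) (D (ind (t \<alpha>, []))) c"
    and "rsz_mult V E s t (D (ind (arr_path s \<alpha>))) (ind (arr_path s \<alpha>)) (arr_path s \<alpha>)
            + rsz_mult V E s t (ind (arr_path s \<alpha>)) (D (ind (arr_path s \<alpha>))) (arr_path s \<alpha>) = 0"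
proof -
  have c: "ind (arr_path s \<alpha>) \<in> rsz_carrier V E s" "ind (s \<alpha>, []) \<in> rsz_carrier V E s"
    "ind (t \<alpha>, []) \<in> rsz_carrier V E s" using \<alpha> sV tV by auto
  have e1: "D (ind (arr_path s \<alpha>)) = vadd (rsz_mult V E s t (D (ind (s \<alpha>, []))) (ind (arr_path s \<alpha>)))
            (rsz_mult V E s t (ind (s \<alpha>, [])) (D (ind (arr_path s \<alpha>))))"
    using Der_mult[OF D c(2) c(1)] unfolding mult_es_xa[OF \<alpha>] .
  have e2: "D (ind (arr_path s \<alpha>)) = vadd (rsz_mult V E s t (D (ind (arr_path s \<alpha>))) (ind (t \<alpha>, [])))
            (rsz_mult V E s t (ind (arr_path s \<alpha>)) (D (ind (t \<alpha>, []))))"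
    using Der_mult[OF D c(1) c(3)] unfolding mult_xa_et[OF \<alpha>] .
  have z: "D (\<lambda>_. 0) = (\<lambda>_. 0)" using lin_zero[OF Der_lin[OF D] closed_carrier] .
  have e3: "(\<lambda>_. 0) = vadd (rsz_mult V E s t (D (ind (arr_path s \<alpha>))) (ind (arr_path s \<alpha>)))
            (rsz_mult V E s t (ind (arr_path s \<alpha>)) (D (ind (arr_path s \<alpha>))))"
    using Der_mult[OF D c(1) c(1)] unfolding mult_xa_xa[OF \<alpha>] z .
  fix c
  show "D (ind (arr_path s \<alpha>)) c = rsz_mult V E s t (D (ind (s \<alpha>, []))) (ind (arr_path s \<alpha>)) c
            + rsz_mult V E s t (ind (s \<alpha>, [])) (D (ind (arr_path s \<alpha>))) c"
    using fun_cong[OF e1, of c] unfolding vadd_def by (simp only:)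
  show "D (ind (arr_path s \<alpha>)) c = rsz_mult V E s t (D (ind (arr_path s \<alpha>))) (ind (t \<alpha>, [])) c
            + rsz_mult V E s t (ind (arr_path s \<alpha>)) (D (ind (t \<alpha>, []))) c"
    using fun_cong[OF e2, of c] unfolding vadd_def by (simp only:)
  show "rsz_mult V E s t (D (ind (arr_path s \<alpha>))) (ind (arr_path s \<alpha>)) (arr_path s \<alpha>)
            + rsz_mult V E s t (ind (arr_path s \<alpha>)) (D (ind (arr_path s \<alpha>))) (arr_path s \<alpha>) = 0"
    using fun_cong[OF e3, of "arr_path s \<alpha>"] unfolding vadd_def by simp
qed

lemma Der_arr_vtx:
  fixes D :: "(('v,'a) path \<Rightarrow> 'k::field_char_0) \<Rightarrow> (('v,'a) path \<Rightarrow> 'k)"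
  assumes D: "D \<in> Der V E s t K" and \<alpha>: "\<alpha> \<in> E"
  shows "D (ind (arr_path s \<alpha>)) (v, []) = 0"
proof (cases "v \<in> V")
  case False
  have i: "D (ind (arr_path s \<alpha>)) \<in> rsz_carrier V E s" using Der_in[OF D] \<alpha> by simp
  show ?thesis using carrier_out[OF i, of "(v, [])"] False by simp
next
  case True
  note a = Der_arr_aux[OF D \<alpha>]
  have m0: "ind (arr_path s \<alpha>) (v, []) = 0" by (simp add: ind_def)
  have h1: "D (ind (arr_path s \<alpha>)) (v, []) = 0" if n: "v \<noteq> s \<alpha>"
  proof -
    have m1: "rsz_mult V E s t (D (ind (s \<alpha>, []))) (ind (arr_path s \<alpha>)) (v, []) = 0"
      using True by (simp add: mult_vtx m0)
    have m2: "rsz_mult V E s t (ind (s \<alpha>, [])) (D (ind (arr_path s \<alpha>))) (v, []) = 0"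
      using True n by (simp add: mult_vtx ind_def)
    show ?thesis using a(1)[of "(v, [])"] m1 m2 by simp
  qed
  have h2: "D (ind (arr_path s \<alpha>)) (v, []) = 0" if n: "v \<noteq> t \<alpha>"
  proof -
    have m1: "rsz_mult V E s t (D (ind (arr_path s \<alpha>))) (ind (t \<alpha>, [])) (v, []) = 0"
      using True n by (simp add: mult_vtx ind_def)
    have m2: "rsz_mult V E s t (ind (arr_path s \<alpha>)) (D (ind (t \<alpha>, []))) (v, []) = 0"
      using True by (simp add: mult_vtx m0)
    show ?thesis using a(2)[of "(v, [])"] m1 m2 by simp
  qed
  have h3: "D (ind (arr_path s \<alpha>)) (s \<alpha>, []) + D (ind (arr_path s \<alpha>)) (t \<alpha>, []) = 0"
    using a(3) \<alpha> by (simp add: mult_arr ind_def)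
  show ?thesis
  proof (cases "v = s \<alpha> \<and> v = t \<alpha>")
    case True
    then have st: "s \<alpha> = v" "t \<alpha> = v" by auto
    have e: "D (ind (arr_path s \<alpha>)) (v, []) + D (ind (arr_path s \<alpha>)) (v, []) = 0" 
      using h3 unfolding st .
    have "(2::'k) * D (ind (arr_path s \<alpha>)) (v, []) = 0" unfolding mult_2 by (rule e)
    then show ?thesis by simp
  next
    case False
    then show ?thesis using h1 h2 by blast
  qed
qed

lemma Der_arr_par:
  assumes D: "D \<in> Der V E s t K" and \<alpha>: "\<alpha> \<in> E" and \<beta>: "\<beta> \<in> E" and ne: "\<alpha> \<noteq> \<beta>"
    and nz: "blk s D \<alpha> \<beta> \<noteq> 0"
  shows "s \<alpha> = s \<beta> \<and> t \<alpha> = t \<beta>"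
proof -
  note a = Der_arr_aux[OF D \<alpha>]
  have m0: "ind (arr_path s \<alpha>) (arr_path s \<beta>) = 0" "ind (arr_path s \<alpha>) (v, []) = 0" for v
    using ne by (auto simp: ind_def)
  have h1: "s \<alpha> = s \<beta>"
  proof (rule ccontr)
    assume n: "s \<alpha> \<noteq> s \<beta>"
    have m1: "rsz_mult V E s t (D (ind (s \<alpha>, []))) (ind (arr_path s \<alpha>)) (arr_path s \<beta>) = 0"
      using \<beta> by (simp add: mult_arr m0)
    have m2: "rsz_mult V E s t (ind (s \<alpha>, [])) (D (ind (arr_path s \<alpha>))) (arr_path s \<beta>) = 0"
      using \<beta> n by (simp add: mult_arr ind_def)
    have "D (ind (arr_path s \<alpha>)) (arr_path s \<beta>) = 0" using a(1)[of "arr_path s \<beta>"] m1 m2 by simp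
    then show False using nz by (simp add: blk_def)
  qed
  have h2: "t \<alpha> = t \<beta>"
  proof (rule ccontr)
    assume n: "t \<alpha> \<noteq> t \<beta>"
    have m1: "rsz_mult V E s t (D (ind (arr_path s \<alpha>))) (ind (t \<alpha>, [])) (arr_path s \<beta>) = 0"
      using \<beta> n by (simp add: mult_arr ind_def)
    have m2: "rsz_mult V E s t (ind (arr_path s \<alpha>)) (D (ind (t \<alpha>, []))) (arr_path s \<beta>) = 0"
      using \<beta> by (simp add: mult_arr m0)
    have "D (ind (arr_path s \<alpha>)) (arr_path s \<beta>) = 0" using a(2)[of "arr_path s \<beta>"] m1 m2 by simp
    then show False using nz by (simp add: blk_def)
  qed
  show ?thesis using h1 h2 by simp
qed


lemma arr_img_basis: "c \<in> arr_path s ` E \<Longrightarrow> c \<in> rsz_basis V E s"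
  by auto

lemma vtx_not_arr[simp]: "(v, []) \<notin> arr_path s ` E"
  by auto

lemma hd_arr[simp]: "hd (snd (arr_path s \<beta>)) = \<beta>"
  by (simp add: arr_path_def)

lemma Dxa_form:
  fixes D :: "(('v,'a) path \<Rightarrow> 'k::field_char_0) \<Rightarrow> (('v,'a) path \<Rightarrow> 'k)"
  assumes D: "D \<in> Der V E s t K" and \<alpha>: "\<alpha> \<in> E"
  shows "D (ind (arr_path s \<alpha>)) = (\<lambda>c. if c \<in> arr_path s ` E then blk s D \<alpha> (hd (snd c)) else 0)"
proof
  fix c
  have i: "D (ind (arr_path s \<alpha>)) \<in> rsz_carrier V E s" using Der_in[OF D] \<alpha> by simp
  show "D (ind (arr_path s \<alpha>)) c = (if c \<in> arr_path s ` E then blk s D \<alpha> (hd (snd c)) else 0)"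
  proof (cases "c \<in> arr_path s ` E")
    case True
    then show ?thesis by (auto simp: blk_def)
  next
    case False
    show ?thesis
    proof (cases "c \<in> rsz_basis V E s")
      case True
      then obtain v where "c = (v, [])" using False unfolding basis_iff by (cases c) auto
      then show ?thesis using Der_arr_vtx[OF D \<alpha>] by simp
    next
      case nb: False
      then show ?thesis using carrier_out[OF i nb] False by simp
    qed
  qed
qed

lemma arrsum: "(\<lambda>c. \<Sum>\<gamma>\<in>E. N \<gamma> * ind (arr_path s \<gamma>) c) = (\<lambda>c. if c \<in> arr_path s ` E then N (hd (snd c)) else (0::'k::field))"
proof
  fix c
  show "(\<Sum>\<gamma>\<in>E. N \<gamma> * ind (arr_path s \<gamma>) c) = (if c \<in> arr_path s ` E then N (hd (snd c)) else 0)"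
  proof (cases "c \<in> arr_path s ` E")
    case True
    then obtain \<beta> where b: "\<beta> \<in> E" "c = arr_path s \<beta>" by auto
    have "(\<Sum>\<gamma>\<in>E. N \<gamma> * ind (arr_path s \<gamma>) c) = (\<Sum>\<gamma>\<in>E. if \<gamma> = \<beta> then N \<gamma> else 0)"
      by (intro sum.cong refl) (auto simp: ind_def b)
    then show ?thesis using b finE by simp
  next
    case False
    then have "\<And>\<gamma>. \<gamma> \<in> E \<Longrightarrow> ind (arr_path s \<gamma>) c = (0::'k)" by (auto simp: ind_def)
    then show ?thesis using False by simp
  qed
qed

lemma Dxa_sum:
  fixes D :: "(('v,'a) path \<Rightarrow> 'k::field_char_0) \<Rightarrow> (('v,'a) path \<Rightarrow> 'k)"
  assumes D: "D \<in> Der V E s t K" and \<alpha>: "\<alpha> \<in> E"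
  shows "D (ind (arr_path s \<alpha>)) = (\<lambda>c. \<Sum>\<gamma>\<in>E. blk s D \<alpha> \<gamma> * ind (arr_path s \<gamma>) c)"
  unfolding arrsum Dxa_form[OF D \<alpha>] ..

lemma derN_eval: "x \<in> rsz_carrier V E s \<Longrightarrow> derN V E s N x c =
   (if c \<in> arr_path s ` E then (\<Sum>\<alpha>\<in>E. x (arr_path s \<alpha>) * N \<alpha> (hd (snd c))) else 0)"
  unfolding derN_def by simp

lemma derN_out: "x \<notin> rsz_carrier V E s \<Longrightarrow> derN V E s N x = (\<lambda>_. 0)"
  unfolding derN_def by simp

lemma derN_in[simp]: "derN V E s N x \<in> rsz_carrier V E s"
  unfolding derN_def rsz_carrier_def by auto

lemma derN_lin: "lin (rsz_carrier V E s) (derN V E s N)"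
  unfolding lin_def
proof (intro conjI ballI allI)
  fix x y :: "('v,'a) path \<Rightarrow> 'b" assume x: "x \<in> rsz_carrier V E s" and y: "y \<in> rsz_carrier V E s"
  have "vadd x y \<in> rsz_carrier V E s" using x y closed_carrier unfolding closed_def by blast
  then show "derN V E s N (vadd x y) = vadd (derN V E s N x) (derN V E s N y)"
    using x y by (auto simp: fun_eq_iff derN_eval vadd_def distrib_right sum.distrib)
next
  fix a :: 'b and x :: "('v,'a) path \<Rightarrow> 'b" assume x: "x \<in> rsz_carrier V E s"
  have "vsmult a x \<in> rsz_carrier V E s" using x closed_carrier unfolding closed_def by blast
  then show "derN V E s N (vsmult a x) = vsmult a (derN V E s N x)"
    using x by (auto simp: fun_eq_iff derN_eval vsmult_def sum_distrib_left mult.assoc)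
qed

lemma blk_derN:
  assumes \<alpha>: "\<alpha> \<in> E" and \<beta>: "\<beta> \<in> E" shows "blk s (derN V E s N) \<alpha> \<beta> = N \<alpha> \<beta>"
proof -
  have "blk s (derN V E s N) \<alpha> \<beta> = (\<Sum>\<gamma>\<in>E. ind (arr_path s \<alpha>) (arr_path s \<gamma>) * N \<gamma> \<beta>)"
    unfolding blk_def using \<alpha> \<beta> by (simp add: derN_eval)
  also have "\<dots> = (\<Sum>\<gamma>\<in>E. if \<gamma> = \<alpha> then N \<gamma> \<beta> else 0)"
    by (intro sum.cong refl) (auto simp: ind_def)
  also have "\<dots> = N \<alpha> \<beta>" using \<alpha> finE by simp
  finally show ?thesis .
qed

lemma derN_cong: "(\<And>\<alpha> \<beta>. \<alpha> \<in> E \<Longrightarrow> \<beta> \<in> E \<Longrightarrow> N \<alpha> \<beta> = N' \<alpha> \<beta>) \<Longrightarrow> derN V E s N = derN V E s N'"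
  unfolding derN_def by (auto simp: fun_eq_iff arr_path_def intro!: sum.cong)


lemma derN_Der:
  assumes par: "\<And>\<alpha> \<beta>. \<alpha> \<in> E \<Longrightarrow> \<beta> \<in> E \<Longrightarrow> N \<alpha> \<beta> \<noteq> 0 \<Longrightarrow> s \<alpha> = s \<beta> \<and> t \<alpha> = t \<beta>"
  shows "derN V E s N \<in> Der V E s t K"
proof -
  have m: "derN V E s N (rsz_mult V E s t x y) = vadd (rsz_mult V E s t (derN V E s N x) y) (rsz_mult V E s t x (derN V E s N y))"
    if x: "x \<in> rsz_carrier V E s" and y: "y \<in> rsz_carrier V E s" for x y
  proof
    fix c
    show "derN V E s N (rsz_mult V E s t x y) c = vadd (rsz_mult V E s t (derN V E s N x) y) (rsz_mult V E s t x (derN V E s N y)) c"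
    proof (cases "c \<in> arr_path s ` E")
      case True
      then obtain \<beta> where b: "\<beta> \<in> E" "c = arr_path s \<beta>" by auto
      have "derN V E s N (rsz_mult V E s t x y) c = (\<Sum>\<alpha>\<in>E. (x (s \<alpha>, []) * y (arr_path s \<alpha>) + x (arr_path s \<alpha>) * y (t \<alpha>, [])) * N \<alpha> \<beta>)"
        using b by (simp add: derN_eval mult_arr)
      also have "\<dots> = (\<Sum>\<alpha>\<in>E. x (arr_path s \<alpha>) * N \<alpha> \<beta> * y (t \<beta>, []) + x (s \<beta>, []) * (y (arr_path s \<alpha>) * N \<alpha> \<beta>))"
      proof (intro sum.cong refl)
        fix \<alpha> assume a: "\<alpha> \<in> E"
        show "(x (s \<alpha>, []) * y (arr_path s \<alpha>) + x (arr_path s \<alpha>) * y (t \<alpha>, [])) * N \<alpha> \<beta> =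
          x (arr_path s \<alpha>) * N \<alpha> \<beta> * y (t \<beta>, []) + x (s \<beta>, []) * (y (arr_path s \<alpha>) * N \<alpha> \<beta>)"
        proof (cases "N \<alpha> \<beta> = 0")
          case True then show ?thesis by simp
        next
          case False then have "s \<alpha> = s \<beta>" "t \<alpha> = t \<beta>" using par[OF a b(1)] by auto
          then show ?thesis by (simp add: algebra_simps)
        qed
      qed
      also have "\<dots> = (\<Sum>\<alpha>\<in>E. x (arr_path s \<alpha>) * N \<alpha> \<beta>) * y (t \<beta>, []) + x (s \<beta>, []) * (\<Sum>\<alpha>\<in>E. y (arr_path s \<alpha>) * N \<alpha> \<beta>)"
        by (simp add: sum.distrib sum_distrib_left sum_distrib_right)
      also have "\<dots> = vadd (rsz_mult V E s t (derN V E s N x) y) (rsz_mult V E s t x (derN V E s N y)) c"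
        using b x y by (simp add: vadd_def mult_arr derN_eval)
      finally show ?thesis .
    next
      case False
      have l: "derN V E s N (rsz_mult V E s t x y) c = 0" using False by (simp add: derN_eval)
      show ?thesis
      proof (cases "c \<in> rsz_basis V E s")
        case True
        then obtain v where v: "c = (v, [])" "v \<in> V" using False unfolding basis_iff by (cases c) auto
        show ?thesis unfolding l using v x y by (simp add: vadd_def mult_vtx derN_eval)
      next
        case nb: False
        show ?thesis unfolding l using nb by (simp add: vadd_def mult_out)
      qed
    qed
  qed
  show ?thesis unfolding Der_def using derN_lin[of N] m
    by (auto simp: derN_out lin_def)
qed


lemma ad_eval: "x \<in> rsz_carrier V E s \<Longrightarrow> ad V E s t a x c = rsz_mult V E s t a x c - rsz_mult V E s t x a c"
  unfolding ad_def by simp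

lemma ad_out: "x \<notin> rsz_carrier V E s \<Longrightarrow> ad V E s t a x = (\<lambda>_. 0)"
  unfolding ad_def by simp

lemma ad_in[simp]: "ad V E s t a x \<in> rsz_carrier V E s"
  unfolding ad_def rsz_carrier_def by (auto simp: mult_out)

lemma ad_Inn: "a \<in> rsz_carrier V E s \<Longrightarrow> ad V E s t a \<in> Inn V E s t K"
  unfolding Inn_iff by blast

lemma ad_lin: "lin (rsz_carrier V E s) (ad V E s t a)"
  unfolding lin_def
proof (intro conjI ballI allI)
  fix x y :: "('v,'a) path \<Rightarrow> 'b" assume x: "x \<in> rsz_carrier V E s" and y: "y \<in> rsz_carrier V E s"
  have "vadd x y \<in> rsz_carrier V E s" using x y closed_carrier unfolding closed_def by blast
  then show "ad V E s t a (vadd x y) = vadd (ad V E s t a x) (ad V E s t a y)"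
    using x y by (auto simp: fun_eq_iff ad_eval vadd_def mult_eval algebra_simps)
next
  fix r :: 'b and x :: "('v,'a) path \<Rightarrow> 'b" assume x: "x \<in> rsz_carrier V E s"
  have "vsmult r x \<in> rsz_carrier V E s" using x closed_carrier unfolding closed_def by blast
  then show "ad V E s t a (vsmult r x) = vsmult r (ad V E s t a x)"
    using x by (auto simp: fun_eq_iff ad_eval vsmult_def mult_eval algebra_simps)
qed

lemma ad_add: "ad V E s t (vadd a b) x = vadd (ad V E s t a x) (ad V E s t b x)"
  by (cases "x \<in> rsz_carrier V E s") (auto simp: fun_eq_iff ad_eval ad_out vadd_def mult_eval algebra_simps)

lemma ad_smult: "ad V E s t (vsmult r a) x = vsmult r (ad V E s t a x)"
  by (cases "x \<in> rsz_carrier V E s") (auto simp: fun_eq_iff ad_eval ad_out vsmult_def mult_eval algebra_simps)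

lemma blk_ad:
  assumes \<alpha>: "\<alpha> \<in> E" and \<beta>: "\<beta> \<in> E"
  shows "blk s (ad V E s t a) \<alpha> \<beta> = (if \<alpha> = \<beta> then a (s \<alpha>, []) - a (t \<alpha>, []) else 0)"
proof -
  have i: "ind (arr_path s \<alpha>) \<in> rsz_carrier V E s" using \<alpha> by simp
  show ?thesis unfolding blk_def ad_eval[OF i] using \<alpha> \<beta> by (simp add: mult_arr ind_def)
qed

lemma vlift_arr[simp]: "vlift V l (arr_path s \<beta>) = 0"
  unfolding vlift_def arr_path_def by simp

lemma vlift_vtx[simp]: "vlift V l (v, []) = (if v \<in> V then l v else 0)"
  unfolding vlift_def by simp

lemma vlift_carrier[simp]: "vlift V l \<in> rsz_carrier V E s"
  unfolding vlift_def rsz_carrier_def basis_iff by auto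

lemma derN_diag: "derN V E s (\<lambda>\<alpha> \<beta>. if \<alpha> = \<beta> then l (s \<alpha>) - l (t \<alpha>) else 0) = ad V E s t (vlift V l)"
proof (intro ext)
  fix x :: "('v,'a) path \<Rightarrow> 'b" and c
  show "derN V E s (\<lambda>\<alpha> \<beta>. if \<alpha> = \<beta> then l (s \<alpha>) - l (t \<alpha>) else 0) x c = ad V E s t (vlift V l) x c"
  proof (cases "x \<in> rsz_carrier V E s")
    case False then show ?thesis by (simp add: derN_out ad_out)
  next
    case x: True
    show ?thesis
    proof (cases "c \<in> arr_path s ` E")
      case True
      then obtain \<beta> where b: "\<beta> \<in> E" "c = arr_path s \<beta>" by auto
      have "derN V E s (\<lambda>\<alpha> \<beta>. if \<alpha> = \<beta> then l (s \<alpha>) - l (t \<alpha>) else 0) x c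
          = (\<Sum>\<alpha>\<in>E. if \<alpha> = \<beta> then x (arr_path s \<alpha>) * (l (s \<alpha>) - l (t \<alpha>)) else 0)"
        using b x by (auto simp: derN_eval intro!: sum.cong)
      also have "\<dots> = x (arr_path s \<beta>) * (l (s \<beta>) - l (t \<beta>))" using b finE by simp
      also have "\<dots> = ad V E s t (vlift V l) x c"
        using b x sV tV by (simp add: ad_eval mult_arr algebra_simps)
      finally show ?thesis .
    next
      case False
      have l: "derN V E s (\<lambda>\<alpha> \<beta>. if \<alpha> = \<beta> then l (s \<alpha>) - l (t \<alpha>) else 0) x c = 0"
        using False x by (simp add: derN_eval)
      show ?thesis
      proof (cases "c \<in> rsz_basis V E s")
        case True
        then obtain v where v: "c = (v, [])" "v \<in> V" using False unfolding basis_iff by (cases c) auto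
        show ?thesis unfolding l using v x by (simp add: ad_eval mult_vtx)
      next
        case nb: False
        show ?thesis unfolding l using nb x by (simp add: ad_eval mult_out)
      qed
    qed
  qed
qed


lemma mult_ew_ew: "w \<in> V \<Longrightarrow> rsz_mult V E s t (ind (w, [])) (ind (w, [])) = ind (w, [])"
  unfolding mult_eval ind_def fun_eq_iff by (auto simp: basis_iff)

lemma mult_ev_ew: "v \<noteq> w \<Longrightarrow> rsz_mult V E s t (ind (v, [])) (ind (w, [])) = (\<lambda>_. 0)"
  unfolding mult_eval ind_def fun_eq_iff by (auto simp: basis_iff arr_path_def)

lemma Der_pt: "D \<in> Der V E s t K \<Longrightarrow> x \<in> rsz_carrier V E s \<Longrightarrow> y \<in> rsz_carrier V E s \<Longrightarrow>
   D (rsz_mult V E s t x y) c = rsz_mult V E s t (D x) y c + rsz_mult V E s t x (D y) c"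
  using Der_mult[of D K x y] by (simp add: vadd_def)

lemma Der_vtx_vtx:
  fixes D :: "(('v,'a) path \<Rightarrow> 'k::field_char_0) \<Rightarrow> (('v,'a) path \<Rightarrow> 'k)"
  assumes D: "D \<in> Der V E s t K" and w: "w \<in> V"
  shows "D (ind (w, [])) (v, []) = 0"
proof (cases "v \<in> V")
  case False
  have i: "D (ind (w, [])) \<in> rsz_carrier V E s" using Der_in[OF D] w by simp
  show ?thesis using carrier_out[OF i, of "(v, [])"] False by simp
next
  case True
  have i: "ind (w, []) \<in> rsz_carrier V E s" using w by simp
  note e = Der_pt[OF D i i, of "(v, [])", unfolded mult_ew_ew[OF w] mult_vtx[OF True]]
  show ?thesis
  proof (cases "v = w")
    case True
    have i1: "ind (w, []) (w, []) = (1::'k)" by (simp add: ind_def)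
    show ?thesis using e unfolding True i1 by simp
  next
    case False
    have i0: "ind (w, []) (v, []) = (0::'k)" using False by (simp add: ind_def)
    show ?thesis using e unfolding i0 by simp
  qed
qed

lemma Der_vtx_arr_zero:
  fixes D :: "(('v,'a) path \<Rightarrow> 'k::field_char_0) \<Rightarrow> (('v,'a) path \<Rightarrow> 'k)"
  assumes D: "D \<in> Der V E s t K" and w: "w \<in> V" and \<gamma>: "\<gamma> \<in> E"
    and nc: "\<not> (s \<gamma> \<noteq> t \<gamma> \<and> (w = s \<gamma> \<or> w = t \<gamma>))"
  shows "D (ind (w, [])) (arr_path s \<gamma>) = 0"
proof -
  have i: "ind (w, []) \<in> rsz_carrier V E s" using w by simp
  have i0: "ind (w, []) (arr_path s \<gamma>) = (0::'k)" by (simp add: ind_def)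
  note e = Der_pt[OF D i i, of "arr_path s \<gamma>", unfolded mult_ew_ew[OF w] mult_arr[OF \<gamma>] i0]
  show ?thesis
  proof (cases "w = s \<gamma>")
    case True
    then have "w = t \<gamma>" using nc by auto
    then have i1: "ind (w, []) (s \<gamma>, []) = (1::'k)" "ind (w, []) (t \<gamma>, []) = (1::'k)" 
      using True by (auto simp: ind_def)
    show ?thesis using e unfolding i1 by simp
  next
    case False
    then have "w \<noteq> t \<gamma>" using nc by auto
    then have i1: "ind (w, []) (s \<gamma>, []) = (0::'k)" "ind (w, []) (t \<gamma>, []) = (0::'k)" 
      using False by (auto simp: ind_def)
    show ?thesis using e unfolding i1 by simp
  qed
qed

lemma Der_vtx_rel:
  fixes D :: "(('v,'a) path \<Rightarrow> 'k::field_char_0) \<Rightarrow> (('v,'a) path \<Rightarrow> 'k)"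
  assumes D: "D \<in> Der V E s t K" and \<gamma>: "\<gamma> \<in> E" and ne: "s \<gamma> \<noteq> t \<gamma>"
  shows "D (ind (s \<gamma>, [])) (arr_path s \<gamma>) + D (ind (t \<gamma>, [])) (arr_path s \<gamma>) = 0"
proof -
  have i: "ind (s \<gamma>, []) \<in> rsz_carrier V E s" "ind (t \<gamma>, []) \<in> rsz_carrier V E s" using \<gamma> sV tV by auto
  have z: "D (\<lambda>_. 0) = (\<lambda>_. 0)" using lin_zero[OF Der_lin[OF D] closed_carrier] .
  have i0: "ind (s \<gamma>, []) (arr_path s \<gamma>) = (0::'k)" "ind (t \<gamma>, []) (arr_path s \<gamma>) = (0::'k)"
    "ind (s \<gamma>, []) (s \<gamma>, []) = (1::'k)" "ind (t \<gamma>, []) (t \<gamma>, []) = (1::'k)"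
    by (auto simp: ind_def)
  note e = Der_pt[OF D i(1) i(2), of "arr_path s \<gamma>", unfolded mult_ev_ew[OF ne] z mult_arr[OF \<gamma>] i0]
  then show ?thesis by simp
qed


lemma derN_ind_arr:
  assumes \<alpha>: "\<alpha> \<in> E"
  shows "derN V E s N (ind (arr_path s \<alpha>)) = (\<lambda>c. if c \<in> arr_path s ` E then N \<alpha> (hd (snd c)) else (0::'k::field))"
proof (rule ext)
  fix c :: "('v,'a) path"
  have i: "ind (arr_path s \<alpha>) \<in> rsz_carrier V E s" using \<alpha> by simp
  have "(\<Sum>\<gamma>\<in>E. ind (arr_path s \<alpha>) (arr_path s \<gamma>) * N \<gamma> (hd (snd c))) = (\<Sum>\<gamma>\<in>E. if \<gamma> = \<alpha> then N \<gamma> (hd (snd c)) else (0::'k))"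
    by (intro sum.cong refl) (auto simp: ind_def)
  then show "derN V E s N (ind (arr_path s \<alpha>)) c = (if c \<in> arr_path s ` E then N \<alpha> (hd (snd c)) else 0)"
    unfolding derN_eval[OF i] using \<alpha> finE by simp
qed

lemma derN_ind_vtx: "derN V E s N (ind (w, [])) = (\<lambda>_. (0::'k::field))"
  by (auto simp: fun_eq_iff derN_def ind_def)

lemma DEC:
  fixes D :: "(('v,'a) path \<Rightarrow> 'k::field_char_0) \<Rightarrow> (('v,'a) path \<Rightarrow> 'k)"
  assumes D: "D \<in> Der V E s t K"
  shows "\<exists>a\<in>rsz_carrier V E s. \<forall>x. D x = vadd (derN V E s (blk s D) x) (ad V E s t a x)"
proof -
  define a where "a = (\<lambda>c. if c \<in> arr_path s ` E \<and> s (hd (snd c)) \<noteq> t (hd (snd c))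
      then D (ind (t (hd (snd c)), [])) c else 0)"
  have aC: "a \<in> rsz_carrier V E s" unfolding a_def rsz_carrier_def by auto
  have av: "a (v, []) = 0" for v unfolding a_def by simp
  have aarr: "a (arr_path s \<gamma>) = (if s \<gamma> \<noteq> t \<gamma> then D (ind (t \<gamma>, [])) (arr_path s \<gamma>) else 0)" if "\<gamma> \<in> E" for \<gamma>
    unfolding a_def using that by auto
  define G where "G = (\<lambda>x. vadd (derN V E s (blk s D) x) (ad V E s t a x))"
  have Glin: "lin (rsz_carrier V E s) G"
    using derN_lin[of "blk s D"] ad_lin[of a] unfolding lin_def G_def vadd_def vsmult_def
    by (simp add: algebra_simps)
  have agree: "D (ind b) = G (ind b)" if b: "b \<in> rsz_basis V E s" for b
  proof (cases "snd b = [] \<and> fst b \<in> V")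
    case False
    then obtain \<alpha> where \<alpha>: "\<alpha> \<in> E" "b = arr_path s \<alpha>" using b unfolding basis_iff by auto
    have i: "ind (arr_path s \<alpha>) \<in> rsz_carrier V E s" using \<alpha> by simp
    have z: "ad V E s t a (ind (arr_path s \<alpha>)) c = 0" for c
      unfolding ad_eval[OF i] mult_eval by (auto simp: av ind_def)
    show ?thesis unfolding \<alpha>(2) G_def Dxa_form[OF D \<alpha>(1)] derN_ind_arr[OF \<alpha>(1)]
      by (simp add: vadd_def z fun_eq_iff)
  next
    case True
    then obtain w where w: "w \<in> V" "b = (w, [])" by (cases b) auto
    have i: "ind (w, []) \<in> rsz_carrier V E s" using w by simp
    have "D (ind (w, [])) c = ad V E s t a (ind (w, [])) c" for c
    proof (cases "c \<in> rsz_basis V E s")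
      case False
      have "D (ind (w, [])) \<in> rsz_carrier V E s" using Der_in[OF D i] .
      then show ?thesis using carrier_out[OF _ False] ad_in by metis
    next
      case True
      show ?thesis
      proof (cases "snd c = [] \<and> fst c \<in> V")
        case True
        then obtain v where v: "v \<in> V" "c = (v, [])" by (cases c) auto
        show ?thesis unfolding v(2) ad_eval[OF i] using Der_vtx_vtx[OF D w(1)] v(1) by (simp add: mult_vtx av)
      next
        case False
        then obtain \<gamma> where g: "\<gamma> \<in> E" "c = arr_path s \<gamma>" using True unfolding basis_iff by auto
        have r: "ad V E s t a (ind (w, [])) c = a (arr_path s \<gamma>) * (ind (w, []) (t \<gamma>, []) - ind (w, []) (s \<gamma>, []))"
          unfolding g(2) ad_eval[OF i] using g(1) by (simp add: mult_arr av ind_def algebra_simps)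
        show ?thesis
        proof (cases "s \<gamma> \<noteq> t \<gamma> \<and> (w = s \<gamma> \<or> w = t \<gamma>)")
          case False
          then have "D (ind (w, [])) c = 0" using Der_vtx_arr_zero[OF D w(1) g(1)] g(2) by simp
          moreover have "ad V E s t a (ind (w, [])) c = 0" using r False aarr[OF g(1)]
            by (auto simp: ind_def)
          ultimately show ?thesis by simp
        next
          case True
          then have ne: "s \<gamma> \<noteq> t \<gamma>" by simp
          show ?thesis
          proof (cases "w = t \<gamma>")
            case True
            then show ?thesis using r g(2) ne aarr[OF g(1)] by (simp add: ind_def)
          next
            case False
            then have ws: "w = s \<gamma>" using True by simp
            have r2: "ad V E s t a (ind (w, [])) c = - D (ind (t \<gamma>, [])) (arr_path s \<gamma>)"
              using r ne aarr[OF g(1)] ws by (simp add: ind_def)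
            have r3: "D (ind (w, [])) c = - D (ind (t \<gamma>, [])) (arr_path s \<gamma>)"
              using Der_vtx_rel[OF D g(1) ne] ws g(2) by (simp add: eq_neg_iff_add_eq_0)
            show ?thesis using r2 r3 by simp
          qed
        qed
      qed
    qed
    then show ?thesis unfolding w(2) G_def derN_ind_vtx by (simp add: vadd_def fun_eq_iff)
  qed
  have "D x = G x" for x
  proof (cases "x \<in> rsz_carrier V E s")
    case True
    show ?thesis by (rule lin_agree[OF Der_lin[OF D] Glin _ True]) (use agree in blast)
  next
    case False
    then show ?thesis unfolding G_def by (simp add: Der_out[OF D] derN_out ad_out vadd_def)
  qed
  then show ?thesis using aC unfolding G_def by blast
qed


lemma blk_bracket:
  fixes D D' :: "(('v,'a) path \<Rightarrow> 'k::field_char_0) \<Rightarrow> (('v,'a) path \<Rightarrow> 'k)"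
  assumes D: "D \<in> Der V E s t K" and D': "D' \<in> Der V E s t K" and \<alpha>: "\<alpha> \<in> E" and \<beta>: "\<beta> \<in> E"
  shows "blk s (dbracket D D') \<alpha> \<beta> = (\<Sum>\<gamma>\<in>E. blk s D' \<alpha> \<gamma> * blk s D \<gamma> \<beta> - blk s D \<alpha> \<gamma> * blk s D' \<gamma> \<beta>)"
proof -
  have c: "\<forall>\<gamma>\<in>E. ind (arr_path s \<gamma>) \<in> rsz_carrier V E s" by simp
  have 1: "D (D' (ind (arr_path s \<alpha>))) = (\<lambda>c. \<Sum>\<gamma>\<in>E. blk s D' \<alpha> \<gamma> * D (ind (arr_path s \<gamma>)) c)"
    unfolding Dxa_sum[OF D' \<alpha>] by (rule lin_sum[OF Der_lin[OF D] closed_carrier finE c])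
  have 2: "D' (D (ind (arr_path s \<alpha>))) = (\<lambda>c. \<Sum>\<gamma>\<in>E. blk s D \<alpha> \<gamma> * D' (ind (arr_path s \<gamma>)) c)"
    unfolding Dxa_sum[OF D \<alpha>] by (rule lin_sum[OF Der_lin[OF D'] closed_carrier finE c])
  show ?thesis unfolding blk_def dbracket_def 1 2 by (simp add: sum_subtractf)
qed

lemma derN_zero: "derN V E s N (\<lambda>_. 0) = (\<lambda>_. (0::'k::field))"
  unfolding derN_def rsz_carrier_def by auto

lemma derN_bracket:
  fixes N N' :: "'a \<Rightarrow> 'a \<Rightarrow> 'k::field"
  shows "dbracket (derN V E s N) (derN V E s N') =
     derN V E s (\<lambda>\<gamma> \<beta>. \<Sum>\<alpha>\<in>E. N' \<gamma> \<alpha> * N \<alpha> \<beta> - N \<gamma> \<alpha> * N' \<alpha> \<beta>)"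
proof (intro ext)
  fix x :: "('v,'a) path \<Rightarrow> 'k" and c :: "('v,'a) path"
  show "dbracket (derN V E s N) (derN V E s N') x c =
     derN V E s (\<lambda>\<gamma> \<beta>. \<Sum>\<alpha>\<in>E. N' \<gamma> \<alpha> * N \<alpha> \<beta> - N \<gamma> \<alpha> * N' \<alpha> \<beta>) x c"
  proof (cases "x \<in> rsz_carrier V E s")
    case False
    then show ?thesis by (simp add: dbracket_def derN_out derN_zero)
  next
    case x: True
    show ?thesis
    proof (cases "c \<in> arr_path s ` E")
      case False then show ?thesis using x by (simp add: dbracket_def derN_eval)
    next
      case True
      then obtain \<beta> where b: "\<beta> \<in> E" "c = arr_path s \<beta>" by auto
      have e1: "derN V E s N (derN V E s N' x) c = (\<Sum>\<alpha>\<in>E. (\<Sum>\<gamma>\<in>E. x (arr_path s \<gamma>) * N' \<gamma> \<alpha>) * N \<alpha> \<beta>)"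
        using b x by (simp add: derN_eval)
      have e2: "derN V E s N' (derN V E s N x) c = (\<Sum>\<alpha>\<in>E. (\<Sum>\<gamma>\<in>E. x (arr_path s \<gamma>) * N \<gamma> \<alpha>) * N' \<alpha> \<beta>)"
        using b x by (simp add: derN_eval)
      have e3: "derN V E s (\<lambda>\<gamma> \<beta>. \<Sum>\<alpha>\<in>E. N' \<gamma> \<alpha> * N \<alpha> \<beta> - N \<gamma> \<alpha> * N' \<alpha> \<beta>) x c
          = (\<Sum>\<gamma>\<in>E. x (arr_path s \<gamma>) * (\<Sum>\<alpha>\<in>E. N' \<gamma> \<alpha> * N \<alpha> \<beta> - N \<gamma> \<alpha> * N' \<alpha> \<beta>))"
        using b x by (simp add: derN_eval)
      have "(\<Sum>\<alpha>\<in>E. (\<Sum>\<gamma>\<in>E. x (arr_path s \<gamma>) * N' \<gamma> \<alpha>) * N \<alpha> \<beta>) - (\<Sum>\<alpha>\<in>E. (\<Sum>\<gamma>\<in>E. x (arr_path s \<gamma>) * N \<gamma> \<alpha>) * N' \<alpha> \<beta>)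
         = (\<Sum>\<alpha>\<in>E. \<Sum>\<gamma>\<in>E. x (arr_path s \<gamma>) * (N' \<gamma> \<alpha> * N \<alpha> \<beta> - N \<gamma> \<alpha> * N' \<alpha> \<beta>))"
        unfolding sum_subtractf[symmetric] sum_distrib_right
        by (intro sum.cong refl) (simp add: algebra_simps)
      also have "\<dots> = (\<Sum>\<gamma>\<in>E. \<Sum>\<alpha>\<in>E. x (arr_path s \<gamma>) * (N' \<gamma> \<alpha> * N \<alpha> \<beta> - N \<gamma> \<alpha> * N' \<alpha> \<beta>))"
        by (rule sum.swap)
      also have "\<dots> = (\<Sum>\<gamma>\<in>E. x (arr_path s \<gamma>) * (\<Sum>\<alpha>\<in>E. N' \<gamma> \<alpha> * N \<alpha> \<beta> - N \<gamma> \<alpha> * N' \<alpha> \<beta>))"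
        by (simp add: sum_distrib_left)
      finally show ?thesis unfolding dbracket_def e1 e2 e3 .
    qed
  qed
qed

end


lemma derN_add: "derN V E s (\<lambda>\<alpha> \<beta>. N \<alpha> \<beta> + N' \<alpha> \<beta>) = dadd (derN V E s N) (derN V E s N')"
  unfolding derN_def dadd_def by (auto simp: fun_eq_iff distrib_left sum.distrib)

lemma derN_smult: "derN V E s (\<lambda>\<alpha> \<beta>. r * N \<alpha> \<beta>) = dsmult r (derN V E s N)"
  unfolding derN_def dsmult_def by (auto simp: fun_eq_iff sum_distrib_left algebra_simps)

lemma derN_lc: "derN V E s (\<lambda>\<alpha> \<beta>. M \<alpha> \<beta> - r * P \<alpha> \<beta>) x c = derN V E s M x c - r * derN V E s P x c"
  unfolding derN_def by (auto simp: sum_distrib_left sum_subtractf algebra_simps)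

lemma blk_dadd: "blk s (dadd D D') \<alpha> \<beta> = blk s D \<alpha> \<beta> + blk s D' \<alpha> \<beta>"
  unfolding blk_def dadd_def by simp

lemma blk_dsmult: "blk s (dsmult r D) \<alpha> \<beta> = r * blk s D \<alpha> \<beta>"
  unfolding blk_def dsmult_def by simp

lemma basis_len: "p \<in> rsz_basis V E s \<Longrightarrow> length (snd p) \<le> 1"
  unfolding rsz_basis_def arr_path_def by auto

lemma flow_exists:
  fixes E :: "'a set" and s t :: "'a \<Rightarrow> 'v"
  assumes finE: "finite E"
    and r: "(v1, u) \<in> ({(s \<alpha>, t \<alpha>) | \<alpha>. \<alpha> \<in> E} \<union> {(t \<alpha>, s \<alpha>) | \<alpha>. \<alpha> \<in> E})\<^sup>*"
  shows "\<exists>w :: 'a \<Rightarrow> 'k::field_char_0. (\<forall>l. (\<Sum>\<alpha>\<in>E. w \<alpha> * (l (s \<alpha>) - l (t \<alpha>))) = l v1 - l u)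
     \<and> (\<forall>\<alpha>\<in>E. \<forall>\<beta>\<in>E. s \<alpha> = s \<beta> \<and> t \<alpha> = t \<beta> \<longrightarrow> w \<alpha> = w \<beta>)"
  using r
proof (induction rule: rtrancl_induct)
  case base
  show ?case by (rule exI[of _ "\<lambda>_. 0"]) simp
next
  case (step u u')
  obtain w :: "'a \<Rightarrow> 'k" where w1: "\<forall>l. (\<Sum>\<alpha>\<in>E. w \<alpha> * (l (s \<alpha>) - l (t \<alpha>))) = l v1 - l u"
    and w2: "\<forall>\<alpha>\<in>E. \<forall>\<beta>\<in>E. s \<alpha> = s \<beta> \<and> t \<alpha> = t \<beta> \<longrightarrow> w \<alpha> = w \<beta>" using step.IH by blast
  obtain \<alpha> and \<epsilon> :: 'k where \<alpha>: "\<alpha> \<in> E"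
    and eps: "\<And>l. \<epsilon> * (l (s \<alpha>) - l (t \<alpha>)) = l u - l u'"
  proof -
    from step.hyps(2) consider (f) \<alpha> where "\<alpha> \<in> E" "u = s \<alpha>" "u' = t \<alpha>" | (b) \<alpha> where "\<alpha> \<in> E" "u = t \<alpha>" "u' = s \<alpha>"
      by blast
    then show ?thesis
    proof cases
      case f then show ?thesis using that[of \<alpha> 1] by simp
    next
      case b then show ?thesis using that[of \<alpha> "-1"] by simp
    qed
  qed
  define P where "P = {\<beta>\<in>E. s \<beta> = s \<alpha> \<and> t \<beta> = t \<alpha>}"
  have finP: "finite P" using finE unfolding P_def by simp
  have cP: "card P > 0" using finP \<alpha> unfolding P_def by (auto simp: card_gt_0_iff)
  define w' where "w' = (\<lambda>\<beta>. w \<beta> + (if \<beta> \<in> P then \<epsilon> / of_nat (card P) else 0))"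
  have "(\<Sum>\<beta>\<in>E. w' \<beta> * (l (s \<beta>) - l (t \<beta>))) = l v1 - l u'" for l
  proof -
    have "(\<Sum>\<beta>\<in>E. w' \<beta> * (l (s \<beta>) - l (t \<beta>))) = (\<Sum>\<beta>\<in>E. w \<beta> * (l (s \<beta>) - l (t \<beta>)))
        + (\<Sum>\<beta>\<in>E. if \<beta> \<in> P then \<epsilon> / of_nat (card P) * (l (s \<beta>) - l (t \<beta>)) else 0)"
      unfolding w'_def sum.distrib[symmetric] by (intro sum.cong refl) (simp add: distrib_right split: if_split)
    also have "(\<Sum>\<beta>\<in>E. if \<beta> \<in> P then \<epsilon> / of_nat (card P) * (l (s \<beta>) - l (t \<beta>)) else 0)
        = (\<Sum>\<beta>\<in>P. \<epsilon> / of_nat (card P) * (l (s \<alpha>) - l (t \<alpha>)))"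
      using finE unfolding sum.inter_filter[OF finE, symmetric] P_def by (intro sum.cong) auto
    also have "\<dots> = \<epsilon> * (l (s \<alpha>) - l (t \<alpha>))" using cP by simp
    finally show ?thesis using w1 eps[of l] by simp
  qed
  moreover have "\<forall>\<alpha>\<in>E. \<forall>\<beta>\<in>E. s \<alpha> = s \<beta> \<and> t \<alpha> = t \<beta> \<longrightarrow> w' \<alpha> = w' \<beta>"
  proof (intro ballI impI)
    fix \<alpha>' \<beta>' assume a: "\<alpha>' \<in> E" "\<beta>' \<in> E" "s \<alpha>' = s \<beta>' \<and> t \<alpha>' = t \<beta>'"
    have "\<alpha>' \<in> P \<longleftrightarrow> \<beta>' \<in> P" using a unfolding P_def by auto
    moreover have "w \<alpha>' = w \<beta>'" using w2 a by blast
    ultimately show "w' \<alpha>' = w' \<beta>'" unfolding w'_def by simp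
  qed
  ultimately show ?case by blast
qed

lemma glue_simps[simp]: "glue v1 vn vn = v1" "v \<noteq> vn \<Longrightarrow> glue v1 vn v = v"
  unfolding glue_def by auto

lemma no_special:
  fixes V :: "'v set" and E :: "'a set" and s t :: "'a \<Rightarrow> 'v"
  assumes Z: "Zspp_zero TYPE('k::field_char_0) V E s t v1 vn" and ne: "v1 \<noteq> vn"
    and \<alpha>: "\<alpha> \<in> E" and \<beta>: "\<beta> \<in> E"
    and gs: "glue v1 vn (s \<alpha>) = glue v1 vn (s \<beta>)" and gt: "glue v1 vn (t \<alpha>) = glue v1 vn (t \<beta>)"
  shows "s \<alpha> = s \<beta> \<and> t \<alpha> = t \<beta>"
proof (rule ccontr)
  assume np: "\<not> (s \<alpha> = s \<beta> \<and> t \<alpha> = t \<beta>)"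
  have ends: "s \<alpha> \<in> {v1, vn} \<or> t \<alpha> \<in> {v1, vn}"
  proof (rule ccontr)
    assume "\<not> (s \<alpha> \<in> {v1, vn} \<or> t \<alpha> \<in> {v1, vn})"
    then have h: "s \<alpha> \<noteq> v1" "s \<alpha> \<noteq> vn" "t \<alpha> \<noteq> v1" "t \<alpha> \<noteq> vn" by auto
    have "s \<beta> = s \<alpha>" using gs h unfolding glue_def by (auto split: if_splits)
    moreover have "t \<beta> = t \<alpha>" using gt h unfolding glue_def by (auto split: if_splits)
    ultimately show False using np by simp
  qed
  define x0 where "x0 = (glue_path v1 vn (arr_path s \<alpha>), glue_path v1 vn (arr_path s \<beta>))"
  have sp: "special_pair V E s t v1 vn \<alpha> (arr_path s \<beta>)"
    unfolding special_pair_def using \<alpha> \<beta> ends np gs gt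
    by (auto simp: rsz_basis_def parallel_def glue_path_def arr_path_def path_tgt_def)
  define f :: "('v,'a) path \<times> ('v,'a) path \<Rightarrow> 'k" where "f = (\<lambda>x. if x = x0 then 1 else 0)"
  let ?SPP = "{(glue_path v1 vn (arr_path s \<alpha>), glue_path v1 vn p) | \<alpha> p. special_pair V E s t v1 vn \<alpha> p}"
  have f1: "\<forall>x. x \<notin> ?SPP \<longrightarrow> f x = 0"
  proof -
    have "x0 \<in> ?SPP" unfolding x0_def using sp by blast
    then show ?thesis unfolding f_def by auto
  qed
  have f2: "\<forall>r\<in>paths2 E (glue v1 vn \<circ> s) (glue v1 vn \<circ> t). \<forall>p\<in>rsz_basis (V - {vn}) E (glue v1 vn \<circ> s).
      delta1 (V - {vn}) E (glue v1 vn \<circ> s) (glue v1 vn \<circ> t) f (r, p) = 0"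
  proof (intro ballI)
    fix r p assume r: "r \<in> paths2 E (glue v1 vn \<circ> s) (glue v1 vn \<circ> t)"
      and p: "p \<in> rsz_basis (V - {vn}) E (glue v1 vn \<circ> s)"
    have lr: "length (snd r) = 2" using r unfolding paths2_def by auto
    have "f ag * of_nat (subst_coeff (V - {vn}) E (glue v1 vn \<circ> s) r (fst ag) (snd ag) p) = 0" for ag
    proof (cases "ag = x0")
      case False then show ?thesis unfolding f_def by simp
    next
      case True
      have sg: "snd (snd ag) = [\<beta>]" unfolding True x0_def by (simp add: glue_path_def arr_path_def)
      have "{i. i < length (snd r) \<and> snd r ! i = hd (snd (fst ag))
          \<and> (fst r, take i (snd r) @ snd (snd ag) @ drop (Suc i) (snd r)) = p
          \<and> p \<in> rsz_basis (V - {vn}) E (glue v1 vn \<circ> s)} = {}"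
      proof -
        have "length (take i (snd r) @ [\<beta>] @ drop (Suc i) (snd r)) = 2" if "i < 2" for i
          using that lr by simp
        moreover have "length (snd p) \<le> 1" using basis_len[OF p] .
        ultimately show ?thesis unfolding sg lr by force
      qed
      then show ?thesis unfolding subst_coeff_def by simp
    qed
    then show "delta1 (V - {vn}) E (glue v1 vn \<circ> s) (glue v1 vn \<circ> t) f (r, p) = 0"
      unfolding delta1_def case_prod_unfold by (intro sum.neutral ballI) simp
  qed
  have "\<forall>x. f x = 0" using Z f1 f2 unfolding Zspp_zero_def Let_def by blast
  then show False unfolding f_def by (metis one_neq_zero)
qed



theorem corollary3p28:
  fixes V :: "'v set" and E :: "'a set" and s t :: "'a \<Rightarrow> 'v" and v1 vn :: 'v
  assumes "is_quiver V E s t"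
    and "v1 \<in> V" and "vn \<in> V" and "v1 \<noteq> vn"
    and "non_isolated E s t v1" and "non_isolated E s t vn"
    and "same_block E s t v1 vn"
    and "Zspp_zero TYPE('k::field_char_0) V E s t v1 vn"
  shows "HH1_iso_times_field (V - {vn}) E (glue v1 vn \<circ> s) (glue v1 vn \<circ> t) V E s t TYPE('k)"
proof -
  note Q = assms(1)[unfolded is_quiver_def]
  have ne: "v1 \<noteq> vn" by fact
  interpret A: rq V E s t using Q by unfold_locales auto
  interpret B: rq "V - {vn}" E "glue v1 vn \<circ> s" "glue v1 vn \<circ> t"
    using Q assms(2,4) by unfold_locales (auto simp: glue_def)
  have g1: "glue v1 vn v1 = v1" using ne by simp
  obtain w :: "'a \<Rightarrow> 'k" where w1': "\<forall>l. (\<Sum>\<alpha>\<in>E. w \<alpha> * (l (s \<alpha>) - l (t \<alpha>))) = l v1 - l vn"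
    and w2': "\<forall>\<alpha>\<in>E. \<forall>\<beta>\<in>E. s \<alpha> = s \<beta> \<and> t \<alpha> = t \<beta> \<longrightarrow> w \<alpha> = w \<beta>"
    using flow_exists[OF A.finE assms(7)[unfolded same_block_def]] by (elim exE conjE)
  have w1: "(\<Sum>\<alpha>\<in>E. w \<alpha> * (l (s \<alpha>) - l (t \<alpha>))) = l v1 - l vn" for l using w1' by (rule spec)
  have w2: "w \<alpha> = w \<beta>" if "\<alpha> \<in> E" "\<beta> \<in> E" "s \<alpha> = s \<beta> \<and> t \<alpha> = t \<beta>" for \<alpha> \<beta>
    using w2' that by blast
  have nosp: "s \<alpha> = s \<beta> \<and> t \<alpha> = t \<beta>" if "\<alpha> \<in> E" "\<beta> \<in> E"
    "glue v1 vn (s \<alpha>) = glue v1 vn (s \<beta>)" "glue v1 vn (t \<alpha>) = glue v1 vn (t \<beta>)" for \<alpha> \<beta>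
    using no_special[OF assms(8) ne that] .
  have parB: "s \<alpha> = s \<beta> \<and> t \<alpha> = t \<beta>"
    if "D \<in> Der (V - {vn}) E (glue v1 vn \<circ> s) (glue v1 vn \<circ> t) TYPE('k)" "\<alpha> \<in> E" "\<beta> \<in> E"
       "blk (glue v1 vn \<circ> s) D \<alpha> \<beta> \<noteq> 0" for D \<alpha> \<beta>
  proof (cases "\<alpha> = \<beta>")
    case True then show ?thesis by simp
  next
    case False
    from B.Der_arr_par[OF that(1-3) False that(4)] show ?thesis using nosp[OF that(2,3)] by simp
  qed
  have parA: "s \<alpha> = s \<beta> \<and> t \<alpha> = t \<beta>"
    if "D \<in> Der V E s t TYPE('k)" "\<alpha> \<in> E" "\<beta> \<in> E" "blk s D \<alpha> \<beta> \<noteq> 0" for D \<alpha> \<beta>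
  proof (cases "\<alpha> = \<beta>")
    case True then show ?thesis by simp
  next
    case False
    from A.Der_arr_par[OF that(1-3) False that(4)] show ?thesis .
  qed
  define \<phi> :: "((('v,'a) path \<Rightarrow> 'k) \<Rightarrow> (('v,'a) path \<Rightarrow> 'k)) \<Rightarrow> ((('v,'a) path \<Rightarrow> 'k) \<Rightarrow> (('v,'a) path \<Rightarrow> 'k))"
    where "\<phi> = (\<lambda>D. derN V E s (blk (glue v1 vn \<circ> s) D))"
  define \<psi> :: "((('v,'a) path \<Rightarrow> 'k) \<Rightarrow> (('v,'a) path \<Rightarrow> 'k)) \<Rightarrow> 'k"
    where "\<psi> = (\<lambda>D. \<Sum>\<alpha>\<in>E. w \<alpha> * blk (glue v1 vn \<circ> s) D \<alpha> \<alpha>)"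
  have c1: "\<forall>D\<in>Der (V - {vn}) E (glue v1 vn \<circ> s) (glue v1 vn \<circ> t) TYPE('k). \<phi> D \<in> Der V E s t TYPE('k)"
  proof
    fix D assume D: "D \<in> Der (V - {vn}) E (glue v1 vn \<circ> s) (glue v1 vn \<circ> t) TYPE('k)"
    show "\<phi> D \<in> Der V E s t TYPE('k)" unfolding \<phi>_def by (rule A.derN_Der) (rule parB[OF D])
  qed
  have c2: "\<forall>D\<in>Der (V - {vn}) E (glue v1 vn \<circ> s) (glue v1 vn \<circ> t) TYPE('k).
      \<forall>D'\<in>Der (V - {vn}) E (glue v1 vn \<circ> s) (glue v1 vn \<circ> t) TYPE('k).
        \<phi> (dadd D D') = dadd (\<phi> D) (\<phi> D') \<and> \<psi> (dadd D D') = \<psi> D + \<psi> D'"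
    unfolding \<phi>_def \<psi>_def blk_dadd derN_add by (simp add: distrib_left sum.distrib)
  have c3: "\<forall>a. \<forall>D\<in>Der (V - {vn}) E (glue v1 vn \<circ> s) (glue v1 vn \<circ> t) TYPE('k).
      \<phi> (dsmult a D) = dsmult a (\<phi> D) \<and> \<psi> (dsmult a D) = a * \<psi> D"
    unfolding \<phi>_def \<psi>_def blk_dsmult derN_smult by (simp add: sum_distrib_left mult.left_commute)
  have c4: "\<forall>D\<in>Der (V - {vn}) E (glue v1 vn \<circ> s) (glue v1 vn \<circ> t) TYPE('k).
      (\<phi> D \<in> Inn V E s t TYPE('k) \<and> \<psi> D = 0) \<longleftrightarrow> D \<in> Inn (V - {vn}) E (glue v1 vn \<circ> s) (glue v1 vn \<circ> t) TYPE('k)"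
  proof
    fix D assume D: "D \<in> Der (V - {vn}) E (glue v1 vn \<circ> s) (glue v1 vn \<circ> t) TYPE('k)"
    show "(\<phi> D \<in> Inn V E s t TYPE('k) \<and> \<psi> D = 0) \<longleftrightarrow> D \<in> Inn (V - {vn}) E (glue v1 vn \<circ> s) (glue v1 vn \<circ> t) TYPE('k)"
    proof
      assume h: "\<phi> D \<in> Inn V E s t TYPE('k) \<and> \<psi> D = 0"
      then obtain a where a: "a \<in> rsz_carrier V E s" "\<phi> D = ad V E s t a" unfolding Inn_iff by blast
      define l where "l = (\<lambda>v. a (v, []))"
      have bD: "blk (glue v1 vn \<circ> s) D \<alpha> \<beta> = (if \<alpha> = \<beta> then l (s \<alpha>) - l (t \<alpha>) else 0)"
        if "\<alpha> \<in> E" "\<beta> \<in> E" for \<alpha> \<beta>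
      proof -
        have "blk (glue v1 vn \<circ> s) D \<alpha> \<beta> = blk s (\<phi> D) \<alpha> \<beta>" unfolding \<phi>_def by (rule A.blk_derN[OF that, symmetric])
        also have "\<dots> = (if \<alpha> = \<beta> then l (s \<alpha>) - l (t \<alpha>) else 0)" unfolding a(2) l_def A.blk_ad[OF that] by simp
        finally show ?thesis .
      qed
      have "\<psi> D = l v1 - l vn" unfolding \<psi>_def w1[symmetric] by (intro sum.cong refl) (simp add: bD)
      then have lv: "l vn = l v1" using h by simp
      have lg: "l (glue v1 vn v) = l v" for v by (cases "v = vn") (simp_all add: lv)
      obtain b where b: "b \<in> rsz_carrier (V - {vn}) E (glue v1 vn \<circ> s)"
        "\<forall>x. D x = vadd (derN (V - {vn}) E (glue v1 vn \<circ> s) (blk (glue v1 vn \<circ> s) D) x) (ad (V - {vn}) E (glue v1 vn \<circ> s) (glue v1 vn \<circ> t) b x)"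
        using B.DEC[OF D] by blast
      have "derN (V - {vn}) E (glue v1 vn \<circ> s) (blk (glue v1 vn \<circ> s) D)
          = derN (V - {vn}) E (glue v1 vn \<circ> s) (\<lambda>\<alpha> \<beta>. if \<alpha> = \<beta> then l ((glue v1 vn \<circ> s) \<alpha>) - l ((glue v1 vn \<circ> t) \<alpha>) else 0)"
        by (rule B.derN_cong) (simp add: bD lg)
      also have "\<dots> = ad (V - {vn}) E (glue v1 vn \<circ> s) (glue v1 vn \<circ> t) (vlift (V - {vn}) l)"
        by (rule B.derN_diag)
      finally have e: "derN (V - {vn}) E (glue v1 vn \<circ> s) (blk (glue v1 vn \<circ> s) D)
          = ad (V - {vn}) E (glue v1 vn \<circ> s) (glue v1 vn \<circ> t) (vlift (V - {vn}) l)" .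
      have "D = ad (V - {vn}) E (glue v1 vn \<circ> s) (glue v1 vn \<circ> t) (vadd (vlift (V - {vn}) l) b)"
        by (rule ext) (simp only: b(2) e B.ad_add)
      moreover have "vadd (vlift (V - {vn}) l) b \<in> rsz_carrier (V - {vn}) E (glue v1 vn \<circ> s)"
        using b(1) B.closed_carrier B.vlift_carrier unfolding closed_def by blast
      ultimately show "D \<in> Inn (V - {vn}) E (glue v1 vn \<circ> s) (glue v1 vn \<circ> t) TYPE('k)"
        unfolding Inn_iff by blast
    next
      assume "D \<in> Inn (V - {vn}) E (glue v1 vn \<circ> s) (glue v1 vn \<circ> t) TYPE('k)"
      then obtain a where a: "a \<in> rsz_carrier (V - {vn}) E (glue v1 vn \<circ> s)"
        "D = ad (V - {vn}) E (glue v1 vn \<circ> s) (glue v1 vn \<circ> t) a" unfolding Inn_iff by blast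
      define l where "l = (\<lambda>v. a (glue v1 vn v, []))"
      have bD: "blk (glue v1 vn \<circ> s) D \<alpha> \<beta> = (if \<alpha> = \<beta> then l (s \<alpha>) - l (t \<alpha>) else 0)"
        if "\<alpha> \<in> E" "\<beta> \<in> E" for \<alpha> \<beta>
        unfolding a(2) l_def B.blk_ad[OF that] by simp
      have "\<phi> D = derN V E s (\<lambda>\<alpha> \<beta>. if \<alpha> = \<beta> then l (s \<alpha>) - l (t \<alpha>) else 0)"
        unfolding \<phi>_def by (rule A.derN_cong) (simp add: bD)
      also have "\<dots> = ad V E s t (vlift V l)" by (rule A.derN_diag)
      finally have "\<phi> D \<in> Inn V E s t TYPE('k)" using A.ad_Inn[OF A.vlift_carrier] by simp
      moreover have "\<psi> D = l v1 - l vn" unfolding \<psi>_def w1[symmetric] by (intro sum.cong refl) (simp add: bD)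
      moreover have "l v1 - l vn = 0" unfolding l_def using g1 by simp
      ultimately show "\<phi> D \<in> Inn V E s t TYPE('k) \<and> \<psi> D = 0" by simp
    qed
  qed
  have c5: "\<forall>E'\<in>Der V E s t TYPE('k). \<forall>c. \<exists>D\<in>Der (V - {vn}) E (glue v1 vn \<circ> s) (glue v1 vn \<circ> t) TYPE('k).
        dsub (\<phi> D) E' \<in> Inn V E s t TYPE('k) \<and> \<psi> D = c"
  proof (intro ballI allI)
    fix E' c assume E': "E' \<in> Der V E s t TYPE('k)"
    define M where "M = blk s E'"
    define \<chi> where "\<chi> = (\<lambda>v. if v = v1 then (1::'k) else 0)"
    define P where "P = (\<lambda>\<alpha> \<beta>. if \<alpha> = \<beta> then \<chi> (s \<alpha>) - \<chi> (t \<alpha>) else (0::'k))"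
    define t0 where "t0 = (\<Sum>\<alpha>\<in>E. w \<alpha> * M \<alpha> \<alpha>) - c"
    define N where "N = (\<lambda>\<alpha> \<beta>. M \<alpha> \<beta> - t0 * P \<alpha> \<beta>)"
    define D where "D = derN (V - {vn}) E (glue v1 vn \<circ> s) N"
    have parN: "(glue v1 vn \<circ> s) \<alpha> = (glue v1 vn \<circ> s) \<beta> \<and> (glue v1 vn \<circ> t) \<alpha> = (glue v1 vn \<circ> t) \<beta>"
      if "\<alpha> \<in> E" "\<beta> \<in> E" "N \<alpha> \<beta> \<noteq> 0" for \<alpha> \<beta>
    proof (cases "\<alpha> = \<beta>")
      case True then show ?thesis by simp
    next
      case False
      then have "M \<alpha> \<beta> \<noteq> 0" using that(3) unfolding N_def P_def by simp
      then have "s \<alpha> = s \<beta> \<and> t \<alpha> = t \<beta>" using parA[OF E' that(1,2)] unfolding M_def by blast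
      then show ?thesis by simp
    qed
    have D: "D \<in> Der (V - {vn}) E (glue v1 vn \<circ> s) (glue v1 vn \<circ> t) TYPE('k)"
      unfolding D_def by (rule B.derN_Der) (rule parN)
    have bD: "blk (glue v1 vn \<circ> s) D \<alpha> \<beta> = N \<alpha> \<beta>" if "\<alpha> \<in> E" "\<beta> \<in> E" for \<alpha> \<beta>
      unfolding D_def by (rule B.blk_derN[OF that])
    have wP: "(\<Sum>\<alpha>\<in>E. w \<alpha> * P \<alpha> \<alpha>) = 1"
      using w1[of \<chi>] ne unfolding P_def \<chi>_def by simp
    have "\<psi> D = (\<Sum>\<alpha>\<in>E. w \<alpha> * (M \<alpha> \<alpha> - t0 * P \<alpha> \<alpha>))"
      unfolding \<psi>_def by (intro sum.cong refl) (simp add: bD N_def)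
    also have "\<dots> = (\<Sum>\<alpha>\<in>E. w \<alpha> * M \<alpha> \<alpha>) - t0 * (\<Sum>\<alpha>\<in>E. w \<alpha> * P \<alpha> \<alpha>)"
      by (simp add: right_diff_distrib sum_subtractf sum_distrib_left mult.left_commute)
    also have "\<dots> = c" unfolding wP t0_def by simp
    finally have psiD: "\<psi> D = c" .
    have phiD: "\<phi> D = derN V E s N" unfolding \<phi>_def by (rule A.derN_cong) (simp add: bD)
    obtain a where a: "a \<in> rsz_carrier V E s" "\<forall>x. E' x = vadd (derN V E s M x) (ad V E s t a x)"
      using A.DEC[OF E'] unfolding M_def by blast
    have derNP: "derN V E s P = ad V E s t (vlift V \<chi>)" unfolding P_def by (rule A.derN_diag)
    define a' where "a' = vadd (vsmult (- t0) (vlift V \<chi>)) (vsmult (- 1) a)"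
    have a'C: "a' \<in> rsz_carrier V E s"
      using a(1) A.closed_carrier A.vlift_carrier unfolding closed_def a'_def by blast
    have "dsub (\<phi> D) E' = ad V E s t a'"
    proof (intro ext)
      fix x c'
      show "dsub (\<phi> D) E' x c' = ad V E s t a' x c'"
        unfolding dsub_def phiD N_def derN_lc a(2)[rule_format] derNP a'_def A.ad_add A.ad_smult
        by (simp add: vadd_def vsmult_def)
    qed
    then have "dsub (\<phi> D) E' \<in> Inn V E s t TYPE('k)" using A.ad_Inn[OF a'C] by simp
    then show "\<exists>D\<in>Der (V - {vn}) E (glue v1 vn \<circ> s) (glue v1 vn \<circ> t) TYPE('k).
        dsub (\<phi> D) E' \<in> Inn V E s t TYPE('k) \<and> \<psi> D = c" using D psiD by blast
  qed
  have c6: "\<forall>D\<in>Der (V - {vn}) E (glue v1 vn \<circ> s) (glue v1 vn \<circ> t) TYPE('k).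
      \<forall>D'\<in>Der (V - {vn}) E (glue v1 vn \<circ> s) (glue v1 vn \<circ> t) TYPE('k).
        dsub (\<phi> (dbracket D D')) (dbracket (\<phi> D) (\<phi> D')) \<in> Inn V E s t TYPE('k)
        \<and> \<psi> (dbracket D D') = 0"
  proof (intro ballI)
    fix D D' assume D: "D \<in> Der (V - {vn}) E (glue v1 vn \<circ> s) (glue v1 vn \<circ> t) TYPE('k)"
      and D': "D' \<in> Der (V - {vn}) E (glue v1 vn \<circ> s) (glue v1 vn \<circ> t) TYPE('k)"
    define M where "M = blk (glue v1 vn \<circ> s) D"
    define M' where "M' = blk (glue v1 vn \<circ> s) D'"
    have bb: "blk (glue v1 vn \<circ> s) (dbracket D D') \<alpha> \<beta> = (\<Sum>\<gamma>\<in>E. M' \<alpha> \<gamma> * M \<gamma> \<beta> - M \<alpha> \<gamma> * M' \<gamma> \<beta>)"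
      if "\<alpha> \<in> E" "\<beta> \<in> E" for \<alpha> \<beta>
      unfolding M_def M'_def by (rule B.blk_bracket[OF D D' that])
    have e1: "\<phi> (dbracket D D') = derN V E s (\<lambda>\<gamma> \<beta>. \<Sum>\<alpha>\<in>E. M' \<gamma> \<alpha> * M \<alpha> \<beta> - M \<gamma> \<alpha> * M' \<alpha> \<beta>)"
      unfolding \<phi>_def by (rule A.derN_cong) (simp add: bb)
    have e2: "dbracket (\<phi> D) (\<phi> D') = derN V E s (\<lambda>\<gamma> \<beta>. \<Sum>\<alpha>\<in>E. M' \<gamma> \<alpha> * M \<alpha> \<beta> - M \<gamma> \<alpha> * M' \<alpha> \<beta>)"
      unfolding \<phi>_def M_def M'_def by (rule A.derN_bracket)
    have z0: "(\<lambda>_. 0) \<in> rsz_carrier V E s" using A.closed_carrier unfolding closed_def by blast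
    have "dsub (\<phi> (dbracket D D')) (dbracket (\<phi> D) (\<phi> D')) = ad V E s t (\<lambda>_. 0)"
    proof (intro ext)
      fix x c
      show "dsub (\<phi> (dbracket D D')) (dbracket (\<phi> D) (\<phi> D')) x c = ad V E s t (\<lambda>_. 0) x c"
      proof (cases "x \<in> rsz_carrier V E s")
        case True then show ?thesis unfolding dsub_def e1 e2 A.ad_eval[OF True] A.mult_eval by simp
      next
        case False then show ?thesis unfolding dsub_def e1 e2 A.ad_out[OF False] by simp
      qed
    qed
    then have i: "dsub (\<phi> (dbracket D D')) (dbracket (\<phi> D) (\<phi> D')) \<in> Inn V E s t TYPE('k)"
      using A.ad_Inn[OF z0] by simp
    define S1 where "S1 = (\<Sum>\<alpha>\<in>E. \<Sum>\<gamma>\<in>E. w \<alpha> * (M' \<alpha> \<gamma> * M \<gamma> \<alpha>))"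
    define S2 where "S2 = (\<Sum>\<alpha>\<in>E. \<Sum>\<gamma>\<in>E. w \<alpha> * (M \<alpha> \<gamma> * M' \<gamma> \<alpha>))"
    have "\<psi> (dbracket D D') = (\<Sum>\<alpha>\<in>E. w \<alpha> * (\<Sum>\<gamma>\<in>E. M' \<alpha> \<gamma> * M \<gamma> \<alpha> - M \<alpha> \<gamma> * M' \<gamma> \<alpha>))"
      unfolding \<psi>_def by (intro sum.cong refl) (simp add: bb)
    also have "\<dots> = S1 - S2" unfolding S1_def S2_def
      by (simp add: sum_distrib_left right_diff_distrib sum_subtractf)
    finally have p: "\<psi> (dbracket D D') = S1 - S2" .
    have "S1 = (\<Sum>\<alpha>\<in>E. \<Sum>\<gamma>\<in>E. w \<gamma> * (M' \<alpha> \<gamma> * M \<gamma> \<alpha>))"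
      unfolding S1_def
    proof (intro sum.cong refl)
      fix \<alpha> \<gamma> assume a: "\<alpha> \<in> E" "\<gamma> \<in> E"
      show "w \<alpha> * (M' \<alpha> \<gamma> * M \<gamma> \<alpha>) = w \<gamma> * (M' \<alpha> \<gamma> * M \<gamma> \<alpha>)"
      proof (cases "M' \<alpha> \<gamma> = 0")
        case True then show ?thesis by simp
      next
        case False
        then have "w \<alpha> = w \<gamma>" using w2[OF a parB[OF D' a]] unfolding M'_def by blast
        then show ?thesis by simp
      qed
    qed
    also have "\<dots> = (\<Sum>\<gamma>\<in>E. \<Sum>\<alpha>\<in>E. w \<gamma> * (M' \<alpha> \<gamma> * M \<gamma> \<alpha>))" by (rule sum.swap)
    also have "\<dots> = S2" unfolding S2_def by (simp add: mult.commute)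
    finally have "S1 = S2" .
    then show "dsub (\<phi> (dbracket D D')) (dbracket (\<phi> D) (\<phi> D')) \<in> Inn V E s t TYPE('k) \<and> \<psi> (dbracket D D') = 0"
      using i p by simp
  qed
  show ?thesis unfolding HH1_iso_times_field_def
    by (rule exI[of _ \<phi>], rule exI[of _ \<psi>]) (intro conjI c1 c2 c3 c4 c5 c6)
qed

end
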